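(* Let sampling data $\{(\mathrm{i}\omega_i, H_i)\}_{i=1}^{N}$ be given, with $\omega_i \in \mathbb{R}$ and $H_i \in \mathbb{C}^{n_o \times n_i}$, closed under conjugation (if $\mathrm{i}\omega_k$ is a sampling frequency then so is $-\mathrm{i}\omega_k$, and the datum at $-\mathrm{i}\omega_k$ is $\overline{H_k}$), and weights $\rho_i > 0$ equal for complex conjugate pairs of sampling frequencies. For real matrices $\hat{E}, \hat{A} \in \mathbb{R}^{r\times r}$, $\hat{B} \in \mathbb{R}^{r \times n_i}$, $\hat{C} \in \mathbb{R}^{n_o \times r}$ let $\hat{H}(s) = \hat{C}(s\hat{E} - \hat{A})^{-1}\hat{B}$ and $\mathcal{J}(\hat{H}) = \sum_{i=1}^{N} \rho_i \|H_i - \hat{H}(\mathrm{i}\omega_i)\|_F^2$. Let $\hat{H}(s) = \sum_{j=1}^{r} \frac{c_j b_j^{*}}{s - \lambda_j}$ (with $c_j = \hat{C}\hat{T}e_j$, $b_j = \hat{B}^{T}\hat{S}e_j$ for invertible $\hat{T},\hat{S}$ with $\hat{S}^*\hat{E}\hat{T} = I$, $\hat{S}^*\hat{A}\hat{T} = \operatorname{diag}(\lambda_1,\dots,\lambda_r)$) have pairwise distinct poles and be a local minimizer of $\mathcal{J}$. Define \[ G(s) = \sum_{i=1}^{N} \rho_i \frac{H_i}{s - \mathrm{i}\omega_i}, \qquad \hat{G}(s) = \sum_{i=1}^{N} \rho_i \frac{\hat{H}(\mathrm{i}\omega_i)}{s - \mathrm{i}\omega_i}. \] Then for $k = 1,\dots,r$: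 \[ G(-\overline{\lambda_k}) b_k = \hat{G}(-\overline{\lambda_k}) b_k, \qquad c_k^{*} G(-\overline{\lambda_k}) = c_k^{*} \hat{G}(-\overline{\lambda_k}), \qquad c_k^{*} G'(-\overline{\lambda_k}) b_k = c_k^{*} \hat{G}'(-\overline{\lambda_k}) b_k. \]
   Context: $\|\cdot\|_F$ is the Frobenius norm, $(\cdot)^*$ the conjugate transpose, $e_j$ the $j$th standard unit vector, $G'$ and $\hat{G}'$ derivatives with respect to $s$. The local minimum is with respect to the real matrices $\hat{E},\hat{A},\hat{B},\hat{C}$ (with $r$ fixed), among those for which $\hat{E}$ is invertible and $\mathrm{i}\omega_i\hat{E} - \hat{A}$ is invertible at all sampling frequencies. *)

theory Defs
  imports "HOL-Analysis.Analysis" "Jordan_Normal_Form.Schur_Decomposition"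
    "Jordan_Normal_Form.Gauss_Jordan_Elimination"
begin

definition cplx :: "real mat \<Rightarrow> complex mat" where
  "cplx M = map_mat complex_of_real M"

definition minv :: "complex mat \<Rightarrow> complex mat" where
  "minv M = the (mat_inverse M)"

definition tf :: "real mat \<Rightarrow> real mat \<Rightarrow> real mat \<Rightarrow> real mat \<Rightarrow> complex \<Rightarrow> complex mat" where
  "tf E A B C s = cplx C * minv (s \<cdot>\<^sub>m cplx E - cplx A) * cplx B"

definition frob_sq :: "complex mat \<Rightarrow> real" where
  "frob_sq M = (\<Sum>i<dim_row M. \<Sum>j<dim_col M. (cmod (M $$ (i,j)))\<^sup>2)"

definition rfrob_sq :: "real mat \<Rightarrow> real" where
  "rfrob_sq M = (\<Sum>i<dim_row M. \<Sum>j<dim_col M. (M $$ (i,j))\<^sup>2)"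

definition Jcost :: "nat \<Rightarrow> (nat \<Rightarrow> real) \<Rightarrow> (nat \<Rightarrow> complex mat) \<Rightarrow> (nat \<Rightarrow> real)
   \<Rightarrow> real mat \<Rightarrow> real mat \<Rightarrow> real mat \<Rightarrow> real mat \<Rightarrow> real" where
  "Jcost N \<omega> H \<rho> E A B C =
     (\<Sum>i<N. \<rho> i * frob_sq (H i - tf E A B C (\<i> * complex_of_real (\<omega> i))))"

definition admissible :: "nat \<Rightarrow> (nat \<Rightarrow> real) \<Rightarrow> nat \<Rightarrow> nat \<Rightarrow> nat
   \<Rightarrow> real mat \<Rightarrow> real mat \<Rightarrow> real mat \<Rightarrow> real mat \<Rightarrow> bool" where
  "admissible N \<omega> r ni no E A B C \<longleftrightarrow>
     E \<in> carrier_mat r r \<and> A \<in> carrier_mat r r \<and> B \<in> carrier_mat r ni \<and> C \<in> carrier_mat no r \<and>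
     invertible_mat E \<and>
     (\<forall>i<N. invertible_mat ((\<i> * complex_of_real (\<omega> i)) \<cdot>\<^sub>m cplx E - cplx A))"

definition local_minimizer :: "nat \<Rightarrow> (nat \<Rightarrow> real) \<Rightarrow> (nat \<Rightarrow> complex mat) \<Rightarrow> (nat \<Rightarrow> real)
   \<Rightarrow> nat \<Rightarrow> nat \<Rightarrow> nat \<Rightarrow> real mat \<Rightarrow> real mat \<Rightarrow> real mat \<Rightarrow> real mat \<Rightarrow> bool" where
  "local_minimizer N \<omega> H \<rho> r ni no E A B C \<longleftrightarrow>
     admissible N \<omega> r ni no E A B C \<and>
     (\<exists>\<epsilon>>0. \<forall>E' A' B' C'. admissible N \<omega> r ni no E' A' B' C' \<and>
        rfrob_sq (E' - E) + rfrob_sq (A' - A) + rfrob_sq (B' - B) + rfrob_sq (C' - C) < \<epsilon>\<^sup>2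
        \<longrightarrow> Jcost N \<omega> H \<rho> E A B C \<le> Jcost N \<omega> H \<rho> E' A' B' C')"

definition Gfun :: "nat \<Rightarrow> nat \<Rightarrow> nat \<Rightarrow> (nat \<Rightarrow> real) \<Rightarrow> (nat \<Rightarrow> complex mat) \<Rightarrow> (nat \<Rightarrow> real)
   \<Rightarrow> complex \<Rightarrow> complex mat" where
  "Gfun no ni N \<omega> M \<rho> s =
     mat no ni (\<lambda>(p,q). \<Sum>i<N. (complex_of_real (\<rho> i) / (s - \<i> * complex_of_real (\<omega> i))) * M i $$ (p,q))"

definition mat_deriv :: "nat \<Rightarrow> nat \<Rightarrow> (complex \<Rightarrow> complex mat) \<Rightarrow> complex \<Rightarrow> complex mat" where
  "mat_deriv m n F s = mat m n (\<lambda>(p,q). deriv (\<lambda>z. F z $$ (p,q)) s)"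

end

theory Submission
  imports Defs
begin


lemma mult_entry:
  assumes "X \<in> carrier_mat m n" "Y \<in> carrier_mat n k" "i < m" "j < k"
  shows "(X * Y) $$ (i,j) = (\<Sum>l<n. X $$ (i,l) * Y $$ (l,j))"
  using assms by (auto simp: scalar_prod_def lessThan_atLeast0 intro!: sum.cong)

lemma adj_carrier: "S \<in> carrier_mat n m \<Longrightarrow> mat_adjoint S \<in> carrier_mat m n"
  by (auto simp: mat_adjoint_def)

lemma adj_entry:
  assumes "S \<in> carrier_mat n m" "i < m" "j < n"
  shows "mat_adjoint S $$ (i,j) = cnj (S $$ (j,i))"
  using assms by (auto simp: mat_adjoint_def mat_of_rows_def)

lemma cplx_carrier[simp]: "cplx M \<in> carrier_mat n m \<longleftrightarrow> M \<in> carrier_mat n m"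
  by (auto simp: cplx_def)

lemma cplx_dims[simp]: "dim_row (cplx M) = dim_row M" "dim_col (cplx M) = dim_col M"
  by (auto simp: cplx_def)

lemma cplx_entry[simp]: "i < dim_row M \<Longrightarrow> j < dim_col M \<Longrightarrow> cplx M $$ (i,j) = of_real (M $$ (i,j))"
  by (auto simp: cplx_def)

lemma minv_props:
  assumes M: "M \<in> carrier_mat n n" and inv: "invertible_mat M"
  shows "minv M \<in> carrier_mat n n \<and> M * minv M = 1\<^sub>m n \<and> minv M * M = 1\<^sub>m n"
proof -
  from inv obtain B where MB: "M * B = 1\<^sub>m n" and BM: "B * M = 1\<^sub>m (dim_row B)"
    using M unfolding invertible_mat_def inverts_mat_def by auto
  have "dim_col B = n" using MB M by (metis index_mult_mat(3) index_one_mat(3))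
  moreover have "dim_row B = n" using BM M by (metis index_mult_mat(3) index_one_mat(3) carrier_matD(2))
  ultimately have Bc: "B \<in> carrier_mat n n" by auto
  have U: "M \<in> Units (ring_mat TYPE(complex) n undefined)"
    using M Bc MB BM unfolding Units_def by (auto simp: ring_mat_simps)
  then have "mat_inverse M \<noteq> None" using mat_inverse(1)[OF M, of undefined] by auto
  then obtain R where "mat_inverse M = Some R" by auto
  from mat_inverse(2)[OF M this] this show ?thesis unfolding minv_def by auto
qed

lemma minv_unique:
  fixes M Z :: "complex mat"
  assumes M: "M \<in> carrier_mat n n" and Z: "Z \<in> carrier_mat n n" and MZ: "M * Z = 1\<^sub>m n"
  shows "invertible_mat M \<and> minv M = Z"
proof -
  have ZM: "Z * M = 1\<^sub>m n" using mat_mult_left_right_inverse[OF M Z MZ] .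
  have inv: "invertible_mat M" using M Z MZ ZM unfolding invertible_mat_def inverts_mat_def
    by (auto intro!: exI[of _ Z])
  from minv_props[OF M inv] have R: "minv M \<in> carrier_mat n n" "minv M * M = 1\<^sub>m n" by auto
  have "minv M = minv M * (M * Z)" using R MZ by simp
  also have "\<dots> = (minv M * M) * Z" using assoc_mult_mat[OF R(1) M Z] by simp
  also have "\<dots> = Z" using R Z by simp
  finally have "minv M = Z" .
  thus ?thesis using inv by simp
qed



lemma im_sum_involution:
  fixes f :: "nat \<Rightarrow> complex"
  assumes sg: "\<forall>i<N. \<sigma> i < N \<and> \<sigma> (\<sigma> i) = i" and f: "\<forall>i<N. f (\<sigma> i) = cnj (f i)"
  shows "Im (\<Sum>i<N. f i) = 0"
proof -
  have bij: "bij_betw \<sigma> {..<N} {..<N}"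
    by (rule bij_betw_byWitness[where f'=\<sigma>]) (use sg in auto)
  have "(\<Sum>i<N. f i) = (\<Sum>i<N. f (\<sigma> i))"
    using sum.reindex_bij_betw[OF bij, of f] by simp
  also have "\<dots> = (\<Sum>i<N. cnj (f i))" using f by simp
  also have "\<dots> = cnj (\<Sum>i<N. f i)" by simp
  finally show ?thesis by (metis cnj.simps(2) add.inverse_unique add_cancel_right_right complex.sel(2) minus_complex.simps(2) neg_equal_zero)
qed

lemma deriv_term:
  fixes x u b :: complex
  shows "((\<lambda>t::real. (cmod (x - of_real t * u / (1 - of_real t * b)))\<^sup>2) has_real_derivative
          (- 2 * Re (cnj x * u))) (at 0)"
proof -
  define g where "g = (\<lambda>z::complex. x - z * u / (1 - z * b))"
  have gd: "(g has_field_derivative (- u)) (at (of_real 0))"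
    unfolding g_def by (auto intro!: derivative_eq_intros)
  have hv: "((\<lambda>t::real. g (of_real t)) has_vector_derivative (- u)) (at 0)"
    using has_vector_derivative_real_field[OF gd] by simp
  have hv2: "((\<lambda>t::real. g (of_real t) * cnj (g (of_real t))) has_vector_derivative
       (g (of_real 0) * cnj (- u) + (- u) * cnj (g (of_real 0)))) (at 0)"
    by (rule derivative_eq_intros hv has_vector_derivative_cnj)+ auto
  have "((\<lambda>t::real. Re (g (of_real t) * cnj (g (of_real t)))) has_real_derivative
       Re (g (of_real 0) * cnj (- u) + (- u) * cnj (g (of_real 0)))) (at 0)"
    using has_field_derivative_Re[OF hv2] .
  moreover have "\<And>t. Re (g (of_real t) * cnj (g (of_real t))) = (cmod (x - of_real t * u / (1 - of_real t * b)))\<^sup>2"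
  proof -
    fix t :: real
    have "Re (g (of_real t) * cnj (g (of_real t))) = (cmod (g (of_real t)))\<^sup>2"
      by (metis Re_complex_of_real complex_norm_square)
    thus "Re (g (of_real t) * cnj (g (of_real t))) = (cmod (x - of_real t * u / (1 - of_real t * b)))\<^sup>2"
      unfolding g_def .
  qed
  moreover have "Re (g (of_real 0) * cnj (- u) + (- u) * cnj (g (of_real 0))) = - 2 * Re (cnj x * u)"
    unfolding g_def by (simp add: algebra_simps)
  ultimately show ?thesis by simp
qed

lemma fermat_sum:
  fixes X u :: "nat \<Rightarrow> nat \<Rightarrow> nat \<Rightarrow> complex" and b :: "nat \<Rightarrow> complex"
    and \<rho> :: "nat \<Rightarrow> real" and f :: "real \<Rightarrow> real"
  assumes d: "d > 0" and minf: "\<forall>t. \<bar>t\<bar> < d \<longrightarrow> f 0 \<le> f t"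
  and feq: "\<forall>t. \<bar>t\<bar> < d \<longrightarrow> f t = (\<Sum>i<N. \<rho> i * (\<Sum>p<no. \<Sum>q<ni.
        (cmod (X i p q - of_real t * u i p q / (1 - of_real t * b i)))\<^sup>2))"
  shows "(\<Sum>i<N. \<rho> i * (\<Sum>p<no. \<Sum>q<ni. Re (cnj (X i p q) * u i p q))) = 0"
proof -
  define g where "g = (\<lambda>t::real. (\<Sum>i<N. \<rho> i * (\<Sum>p<no. \<Sum>q<ni.
        (cmod (X i p q - of_real t * u i p q / (1 - of_real t * b i)))\<^sup>2)))"
  have D: "(g has_real_derivative (\<Sum>i<N. \<rho> i * (\<Sum>p<no. \<Sum>q<ni. - 2 * Re (cnj (X i p q) * u i p q)))) (at 0)"
    unfolding g_def
    by (intro DERIV_sum DERIV_cmult deriv_term)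
  have "\<forall>y. \<bar>0 - y\<bar> < d \<longrightarrow> g 0 \<le> g y"
    using minf feq d unfolding g_def by auto
  from DERIV_local_min[OF D d this]
  have "(\<Sum>i<N. \<rho> i * (\<Sum>p<no. \<Sum>q<ni. - 2 * Re (cnj (X i p q) * u i p q))) = 0" .
  moreover have "(\<Sum>i<N. \<rho> i * (\<Sum>p<no. \<Sum>q<ni. - 2 * Re (cnj (X i p q) * u i p q)))
     = - 2 * (\<Sum>i<N. \<rho> i * (\<Sum>p<no. \<Sum>q<ni. Re (cnj (X i p q) * u i p q)))"
  proof -
    have "\<And>i. (\<Sum>p<no. \<Sum>q<ni. - 2 * Re (cnj (X i p q) * u i p q)) = - 2 * (\<Sum>p<no. \<Sum>q<ni. Re (cnj (X i p q) * u i p q))"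
      by (simp only: sum_distrib_left)
    then show ?thesis by (simp only: sum_distrib_left mult.left_commute)
  qed
  ultimately show ?thesis by simp
qed

lemma triple_entry:
  fixes X Y Z :: "complex mat"
  assumes "X \<in> carrier_mat m n" "Y \<in> carrier_mat n k" "Z \<in> carrier_mat k l" "p < m" "q < l"
  shows "(X * Y * Z) $$ (p,q) = (\<Sum>b<k. (\<Sum>a<n. X $$ (p,a) * Y $$ (a,b)) * Z $$ (b,q))"
proof -
  have "(X * Y * Z) $$ (p,q) = (\<Sum>b<k. (X * Y) $$ (p,b) * Z $$ (b,q))"
    by (rule mult_entry[of _ m k]) (use assms in auto)
  also have "\<dots> = (\<Sum>b<k. (\<Sum>a<n. X $$ (p,a) * Y $$ (a,b)) * Z $$ (b,q))"
  proof (rule sum.cong[OF refl])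
    fix b assume "b \<in> {..<k}"
    then show "(X * Y) $$ (p,b) * Z $$ (b,q) = (\<Sum>a<n. X $$ (p,a) * Y $$ (a,b)) * Z $$ (b,q)"
      using mult_entry[of X m n Y k p b] assms by simp
  qed
  finally show ?thesis .
qed

lemma of_real_ifz: "complex_of_real (if P then 1 else 0) = (if P then 1 else 0)" by simp

lemma sum_delta_mult:
  fixes c :: complex and r :: nat
  shows "q0 < r \<Longrightarrow> (\<Sum>a<r. c * (if a = q0 then 1 else 0) * f a) = c * f q0"
proof -
  assume q0: "q0 < r"
  have "(\<Sum>a<r. c * (if a = q0 then 1 else 0) * f a) = (\<Sum>a<r. if a = q0 then c * f a else 0)"
    by (rule sum.cong) auto
  also have "\<dots> = c * f q0" using q0 by (subst sum.delta) auto
  finally show ?thesis .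
qed

definition unitm :: "nat \<Rightarrow> nat \<Rightarrow> nat \<Rightarrow> nat \<Rightarrow> real mat" where
  "unitm n m a b = mat n m (\<lambda>(i,j). if i = a \<and> j = b then 1 else 0)"

lemma rfrob_zero: "rfrob_sq (M - M) = 0"
  unfolding rfrob_sq_def by simp

lemma rfrob_unit:
  assumes M: "M \<in> carrier_mat n m" and a: "a < n" and b: "b < m"
  shows "rfrob_sq ((M + t \<cdot>\<^sub>m unitm n m a b) - M) = t\<^sup>2"
proof -
  have "rfrob_sq ((M + t \<cdot>\<^sub>m unitm n m a b) - M) = (\<Sum>i<n. \<Sum>j<m. (if i = a \<and> j = b then t else 0)\<^sup>2)"
    unfolding rfrob_sq_def using M by (auto simp: unitm_def intro!: sum.cong)
  also have "\<dots> = (\<Sum>i<n. if i = a then t\<^sup>2 else 0)"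
    by (rule sum.cong[OF refl]) (use b in \<open>auto simp: if_distrib[of "\<lambda>x. x\<^sup>2"] cong: if_cong\<close>)
  also have "\<dots> = t\<^sup>2" using a by simp
  finally show ?thesis .
qed

lemma swap2: "(\<Sum>b\<in>B. \<Sum>i\<in>I. \<Sum>p\<in>J. g b i p) = (\<Sum>i\<in>I. \<Sum>p\<in>J. \<Sum>b\<in>B. g b i p)"
proof -
  have "(\<Sum>b\<in>B. \<Sum>i\<in>I. \<Sum>p\<in>J. g b i p) = (\<Sum>i\<in>I. \<Sum>b\<in>B. \<Sum>p\<in>J. g b i p)" by (rule sum.swap)
  also have "\<dots> = (\<Sum>i\<in>I. \<Sum>p\<in>J. \<Sum>b\<in>B. g b i p)" by (rule sum.cong[OF refl], rule sum.swap)
  finally show ?thesis .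
qed

lemma swap3: "(\<Sum>b\<in>B. \<Sum>i\<in>I. \<Sum>p\<in>J. \<Sum>q\<in>K. g b i p q) = (\<Sum>i\<in>I. \<Sum>p\<in>J. \<Sum>q\<in>K. \<Sum>b\<in>B. g b i p q)"
proof -
  have "(\<Sum>b\<in>B. \<Sum>i\<in>I. \<Sum>p\<in>J. \<Sum>q\<in>K. g b i p q) = (\<Sum>i\<in>I. \<Sum>b\<in>B. \<Sum>p\<in>J. \<Sum>q\<in>K. g b i p q)" by (rule sum.swap)
  also have "\<dots> = (\<Sum>i\<in>I. \<Sum>p\<in>J. \<Sum>q\<in>K. \<Sum>b\<in>B. g b i p q)" by (rule sum.cong[OF refl], rule swap2)
  finally show ?thesis .
qed

locale cfg =
  fixes N r ni no :: nat
    and \<omega> \<rho> :: "nat \<Rightarrow> real"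
    and H :: "nat \<Rightarrow> complex mat"
    and E A B C :: "real mat"
    and S T :: "complex mat"
    and lam :: "nat \<Rightarrow> complex"
  assumes H_dim: "\<forall>i<N. H i \<in> carrier_mat no ni"
    and \<omega>_distinct: "inj_on \<omega> {..<N}"
    and conj_closed: "\<forall>k<N. \<exists>j<N. \<omega> j = - \<omega> k \<and> H j = map_mat cnj (H k) \<and> \<rho> j = \<rho> k"
    and \<rho>_pos: "\<forall>i<N. \<rho> i > 0"
    and S_T: "S \<in> carrier_mat r r" "T \<in> carrier_mat r r" "invertible_mat S" "invertible_mat T"
    and SET: "mat_adjoint S * cplx E * T = 1\<^sub>m r"
    and SAT: "mat_adjoint S * cplx A * T = mat r r (\<lambda>(i,j). if i = j then lam i else 0)"
    and poles_distinct: "\<forall>i<r. \<forall>j<r. i \<noteq> j \<longrightarrow> lam i \<noteq> lam j"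
    and locmin: "local_minimizer N \<omega> H \<rho> r ni no E A B C"
begin

definition sp where "sp i = \<i> * complex_of_real (\<omega> i)"
definition Mi where "Mi i = sp i \<cdot>\<^sub>m cplx E - cplx A"
definition R where "R i = minv (Mi i)"
definition X where "X i p q = (H i - tf E A B C (sp i)) $$ (p,q)"
definition CR where "CR i p a = (\<Sum>m<r. of_real (C $$ (p,m)) * R i $$ (m,a))"
definition RB where "RB i b q = (\<Sum>n<r. R i $$ (b,n) * of_real (B $$ (n,q)))"

lemma adm: "admissible N \<omega> r ni no E A B C"
  using locmin unfolding local_minimizer_def by auto

lemma dims: "E \<in> carrier_mat r r" "A \<in> carrier_mat r r" "B \<in> carrier_mat r ni" "C \<in> carrier_mat no r"
  using adm unfolding admissible_def by auto

lemma Mi_carrier: "Mi i \<in> carrier_mat r r"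
  using dims unfolding Mi_def by auto

lemma Mi_entry: "a < r \<Longrightarrow> b < r \<Longrightarrow> Mi i $$ (a,b) = sp i * of_real (E $$ (a,b)) - of_real (A $$ (a,b))"
  using dims unfolding Mi_def by auto

lemma Mi_inv: "i < N \<Longrightarrow> invertible_mat (Mi i)"
  using adm unfolding admissible_def Mi_def sp_def by auto

lemma R_props: "i < N \<Longrightarrow> R i \<in> carrier_mat r r \<and> Mi i * R i = 1\<^sub>m r \<and> R i * Mi i = 1\<^sub>m r"
  unfolding R_def using minv_props[OF Mi_carrier Mi_inv] by auto

lemma tf_eq: "tf E A B C (sp i) = cplx C * R i * cplx B"
  unfolding tf_def R_def Mi_def ..

lemma tf_carrier: "i < N \<Longrightarrow> tf E A B C (sp i) \<in> carrier_mat no ni"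
  unfolding tf_eq using R_props dims by auto

lemma tf_entry: "i < N \<Longrightarrow> p < no \<Longrightarrow> q < ni \<Longrightarrow>
   tf E A B C (sp i) $$ (p,q) = (\<Sum>b<r. CR i p b * of_real (B $$ (b,q)))"
proof -
  assume i: "i < N" and p: "p < no" and q: "q < ni"
  have Rc: "R i \<in> carrier_mat r r" using R_props[OF i] by auto
  have "(cplx C * R i * cplx B) $$ (p,q) = (\<Sum>b<r. (cplx C * R i) $$ (p,b) * cplx B $$ (b,q))"
    by (rule mult_entry[of _ no r _ ni]) (use Rc dims p q in auto)
  also have "\<dots> = (\<Sum>b<r. CR i p b * of_real (B $$ (b,q)))"
  proof (rule sum.cong)
    fix b assume "b \<in> {..<r}"
    then have "(cplx C * R i) $$ (p,b) = CR i p b"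
      unfolding CR_def by (subst mult_entry[of _ no r _ r]) (use Rc dims p in auto)
    thus "(cplx C * R i) $$ (p,b) * cplx B $$ (b,q) = CR i p b * of_real (B $$ (b,q))"
      using \<open>b \<in> {..<r}\<close> dims q by auto
  qed simp
  finally show ?thesis unfolding tf_eq .
qed

lemma X_entry: "i < N \<Longrightarrow> p < no \<Longrightarrow> q < ni \<Longrightarrow>
   X i p q = H i $$ (p,q) - (\<Sum>b<r. CR i p b * of_real (B $$ (b,q)))"
proof -
  assume i: "i < N" and p: "p < no" and q: "q < ni"
  show ?thesis unfolding X_def using tf_carrier[OF i] tf_entry[OF i p q] p q by auto
qed

definition \<sigma> where "\<sigma> k = (SOME j. j<N \<and> \<omega> j = - \<omega> k \<and> H j = map_mat cnj (H k) \<and> \<rho> j = \<rho> k)"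

lemma sig: "k < N \<Longrightarrow> \<sigma> k < N \<and> \<omega> (\<sigma> k) = - \<omega> k \<and> H (\<sigma> k) = map_mat cnj (H k) \<and> \<rho> (\<sigma> k) = \<rho> k"
  unfolding \<sigma>_def by (rule someI_ex) (use conj_closed in auto)

lemma sigsig: "k < N \<Longrightarrow> \<sigma> (\<sigma> k) = k"
proof -
  assume k: "k < N"
  have "\<sigma> (\<sigma> k) < N" "\<omega> (\<sigma> (\<sigma> k)) = \<omega> k" using sig[OF k] sig[of "\<sigma> k"] by auto
  thus ?thesis using \<omega>_distinct k unfolding inj_on_def by auto
qed

lemma sp_sig: "k < N \<Longrightarrow> sp (\<sigma> k) = cnj (sp k)"
  using sig unfolding sp_def by (simp add: complex_eq_iff)

lemma R_sig: assumes i: "i < N" and a: "a < r" and b: "b < r"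
  shows "R (\<sigma> i) $$ (a,b) = cnj (R i $$ (a,b))"
proof -
  have Rc: "R i \<in> carrier_mat r r" and MR: "Mi i * R i = 1\<^sub>m r" using R_props[OF i] by auto
  have "Mi (\<sigma> i) * map_mat cnj (R i) = 1\<^sub>m r"
  proof (rule eq_matI)
    fix x y assume x: "x < dim_row (1\<^sub>m r :: complex mat)" and y: "y < dim_col (1\<^sub>m r :: complex mat)"
    have "(Mi (\<sigma> i) * map_mat cnj (R i)) $$ (x,y) = (\<Sum>l<r. Mi (\<sigma> i) $$ (x,l) * map_mat cnj (R i) $$ (l,y))"
      by (rule mult_entry) (use x y Rc Mi_carrier in auto)
    also have "\<dots> = (\<Sum>l<r. cnj (Mi i $$ (x,l) * R i $$ (l,y)))"
      by (rule sum.cong) (use x y Rc i in \<open>auto simp: Mi_entry sp_sig\<close>)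
    also have "\<dots> = cnj ((Mi i * R i) $$ (x,y))"
      by (subst mult_entry[of _ r r _ r]) (use x y Rc Mi_carrier in auto)
    also have "\<dots> = 1\<^sub>m r $$ (x,y)" using MR x y by auto
    finally show "(Mi (\<sigma> i) * map_mat cnj (R i)) $$ (x,y) = 1\<^sub>m r $$ (x,y)" .
  qed (use Mi_carrier Rc in auto)
  from minv_unique[OF Mi_carrier _ this] Rc have "R (\<sigma> i) = map_mat cnj (R i)"
    unfolding R_def by auto
  thus ?thesis using Rc a b by auto
qed

lemma CR_sig: "i < N \<Longrightarrow> a < r \<Longrightarrow> CR (\<sigma> i) p a = cnj (CR i p a)"
  unfolding CR_def by (auto simp: R_sig intro!: sum.cong)

lemma RB_sig: "i < N \<Longrightarrow> b < r \<Longrightarrow> RB (\<sigma> i) b q = cnj (RB i b q)"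
  unfolding RB_def by (auto simp: R_sig intro!: sum.cong)

lemma X_sig: "i < N \<Longrightarrow> p < no \<Longrightarrow> q < ni \<Longrightarrow> X (\<sigma> i) p q = cnj (X i p q)"
  using sig[of i] H_dim by (auto simp: X_entry CR_sig)


lemma pert:
  fixes Ap Bp Cp :: "real \<Rightarrow> real mat" and u :: "nat \<Rightarrow> nat \<Rightarrow> nat \<Rightarrow> complex" and \<beta> :: "nat \<Rightarrow> complex"
  assumes d: "d > 0"
  and admt: "\<forall>t. \<bar>t\<bar> < d \<longrightarrow> admissible N \<omega> r ni no E (Ap t) (Bp t) (Cp t)"
  and dist: "\<forall>t. rfrob_sq (E - E) + rfrob_sq (Ap t - A) + rfrob_sq (Bp t - B) + rfrob_sq (Cp t - C) = t\<^sup>2"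
  and ent: "\<forall>t. \<bar>t\<bar> < d \<longrightarrow> t \<noteq> 0 \<longrightarrow> (\<forall>i<N. \<forall>p<no. \<forall>q<ni.
      (H i - tf E (Ap t) (Bp t) (Cp t) (sp i)) $$ (p,q) = X i p q - of_real t * u i p q / (1 - of_real t * \<beta> i))"
  shows "(\<Sum>i<N. \<rho> i * (\<Sum>p<no. \<Sum>q<ni. Re (cnj (X i p q) * u i p q))) = 0"
proof -
  obtain \<epsilon> where \<epsilon>: "\<epsilon> > 0" and minJ: "\<forall>E' A' B' C'. admissible N \<omega> r ni no E' A' B' C' \<and>
        rfrob_sq (E' - E) + rfrob_sq (A' - A) + rfrob_sq (B' - B) + rfrob_sq (C' - C) < \<epsilon>\<^sup>2
        \<longrightarrow> Jcost N \<omega> H \<rho> E A B C \<le> Jcost N \<omega> H \<rho> E' A' B' C'"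
    using locmin unfolding local_minimizer_def by auto
  define f where "f t = (if t = 0 then Jcost N \<omega> H \<rho> E A B C else Jcost N \<omega> H \<rho> E (Ap t) (Bp t) (Cp t))" for t
  define d' where "d' = min d \<epsilon>"
  have d': "d' > 0" using d \<epsilon> unfolding d'_def by auto
  show ?thesis
  proof (rule fermat_sum[OF d', of f])
    show "\<forall>t. \<bar>t\<bar> < d' \<longrightarrow> f 0 \<le> f t"
    proof (intro allI impI)
      fix t :: real assume t: "\<bar>t\<bar> < d'"
      show "f 0 \<le> f t"
      proof (cases "t = 0")
        case False
        have "\<bar>t\<bar> < \<epsilon>" using t unfolding d'_def by auto
        then have "\<bar>t\<bar>\<^sup>2 < \<epsilon>\<^sup>2" by (intro power_strict_mono) auto
        then have "t\<^sup>2 < \<epsilon>\<^sup>2" by simp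
        then show ?thesis using minJ admt dist t False unfolding f_def d'_def by auto
      qed (simp add: f_def)
    qed
    show "\<forall>t. \<bar>t\<bar> < d' \<longrightarrow> f t = (\<Sum>i<N. \<rho> i * (\<Sum>p<no. \<Sum>q<ni.
        (cmod (X i p q - of_real t * u i p q / (1 - of_real t * \<beta> i)))\<^sup>2))"
    proof (intro allI impI)
      fix t :: real assume t: "\<bar>t\<bar> < d'"
      show "f t = (\<Sum>i<N. \<rho> i * (\<Sum>p<no. \<Sum>q<ni.
        (cmod (X i p q - of_real t * u i p q / (1 - of_real t * \<beta> i)))\<^sup>2))"
      proof (cases "t = 0")
        case True
        have "f t = (\<Sum>i<N. \<rho> i * frob_sq (H i - tf E A B C (sp i)))"
          unfolding f_def Jcost_def sp_def using True by simp
        also have "\<dots> = (\<Sum>i<N. \<rho> i * (\<Sum>p<no. \<Sum>q<ni.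
           (cmod (X i p q - of_real t * u i p q / (1 - of_real t * \<beta> i)))\<^sup>2))"
        proof (rule sum.cong[OF refl])
          fix i assume "i \<in> {..<N}"
          then have i: "i < N" by simp
          have "dim_row (H i - tf E A B C (sp i)) = no" "dim_col (H i - tf E A B C (sp i)) = ni"
            using tf_carrier[OF i] by auto
          then show "\<rho> i * frob_sq (H i - tf E A B C (sp i)) =
                \<rho> i * (\<Sum>p<no. \<Sum>q<ni. (cmod (X i p q - of_real t * u i p q / (1 - of_real t * \<beta> i)))\<^sup>2)"
            unfolding frob_sq_def X_def using True by simp
        qed
        finally show ?thesis .
      next
        case False
        have ad: "admissible N \<omega> r ni no E (Ap t) (Bp t) (Cp t)" using admt t unfolding d'_def by auto
        have "f t = (\<Sum>i<N. \<rho> i * frob_sq (H i - tf E (Ap t) (Bp t) (Cp t) (sp i)))"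
          unfolding f_def Jcost_def sp_def using False by simp
        also have "\<dots> = (\<Sum>i<N. \<rho> i * (\<Sum>p<no. \<Sum>q<ni.
           (cmod (X i p q - of_real t * u i p q / (1 - of_real t * \<beta> i)))\<^sup>2))"
        proof (rule sum.cong[OF refl])
          fix i assume "i \<in> {..<N}"
          then have i: "i < N" by simp
          have dr: "dim_row (H i - tf E (Ap t) (Bp t) (Cp t) (sp i)) = no" and dc: "dim_col (H i - tf E (Ap t) (Bp t) (Cp t) (sp i)) = ni"
            using ad unfolding admissible_def tf_def by auto
          have e: "\<forall>p<no. \<forall>q<ni. (H i - tf E (Ap t) (Bp t) (Cp t) (sp i)) $$ (p,q) = X i p q - of_real t * u i p q / (1 - of_real t * \<beta> i)"
          proof -
            have "\<bar>t\<bar> < d" using t unfolding d'_def by auto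
            then show ?thesis using ent False i by blast
          qed
          show "\<rho> i * frob_sq (H i - tf E (Ap t) (Bp t) (Cp t) (sp i)) =
                \<rho> i * (\<Sum>p<no. \<Sum>q<ni. (cmod (X i p q - of_real t * u i p q / (1 - of_real t * \<beta> i)))\<^sup>2)"
            unfolding frob_sq_def dr dc using e by (intro arg_cong[where f="\<lambda>x. \<rho> i * x"] sum.cong refl) auto
        qed
        finally show ?thesis .
      qed
    qed
  qed
qed

lemma tf_gen: "i < N \<Longrightarrow> C' \<in> carrier_mat no r \<Longrightarrow> B' \<in> carrier_mat r ni \<Longrightarrow> p < no \<Longrightarrow> q < ni \<Longrightarrow>
  (H i - cplx C' * R i * cplx B') $$ (p,q) = H i $$ (p,q) -
     (\<Sum>b<r. (\<Sum>a<r. of_real (C' $$ (p,a)) * R i $$ (a,b)) * of_real (B' $$ (b,q)))"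
proof -
  assume i: "i < N" and Cc: "C' \<in> carrier_mat no r" and Bc: "B' \<in> carrier_mat r ni" and p: "p < no" and q: "q < ni"
  have Rc: "R i \<in> carrier_mat r r" using R_props[OF i] by auto
  have "(cplx C' * R i * cplx B') $$ (p,q) = (\<Sum>b<r. (\<Sum>a<r. cplx C' $$ (p,a) * R i $$ (a,b)) * cplx B' $$ (b,q))"
    by (rule triple_entry[of _ no r _ r _ ni]) (use Cc Bc Rc p q in auto)
  also have "\<dots> = (\<Sum>b<r. (\<Sum>a<r. of_real (C' $$ (p,a)) * R i $$ (a,b)) * of_real (B' $$ (b,q)))"
    using Cc Bc p q by (auto intro!: sum.cong)
  finally show ?thesis using Cc Bc Rc p q by auto
qed

lemma pertC:
  assumes p0: "p0 < no" and q0: "q0 < r"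
  shows "(\<Sum>i<N. \<rho> i * (\<Sum>p<no. \<Sum>q<ni. Re (cnj (X i p q) * (if p = p0 then RB i q0 q else 0)))) = 0"
proof (rule pert[where Ap="\<lambda>t. A" and Bp="\<lambda>t. B" and Cp="\<lambda>t. C + t \<cdot>\<^sub>m unitm no r p0 q0" and \<beta>="\<lambda>i. 0" and d=1])
  show "\<forall>t. \<bar>t\<bar> < 1 \<longrightarrow> admissible N \<omega> r ni no E A B (C + t \<cdot>\<^sub>m unitm no r p0 q0)"
    using adm dims unfolding admissible_def by (auto simp: unitm_def)
  show "\<forall>t. rfrob_sq (E - E) + rfrob_sq (A - A) + rfrob_sq (B - B) + rfrob_sq (C + t \<cdot>\<^sub>m unitm no r p0 q0 - C) = t\<^sup>2"
    using rfrob_unit[OF dims(4) p0 q0] by (simp add: rfrob_zero)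
  show "\<forall>t. \<bar>t\<bar> < 1 \<longrightarrow> t \<noteq> 0 \<longrightarrow> (\<forall>i<N. \<forall>p<no. \<forall>q<ni.
      (H i - tf E A B (C + t \<cdot>\<^sub>m unitm no r p0 q0) (sp i)) $$ (p,q) = X i p q - of_real t * (if p = p0 then RB i q0 q else 0) / (1 - of_real t * 0))"
  proof (intro allI impI)
    fix t :: real and i p q assume i: "i < N" and p: "p < no" and q: "q < ni"
    have Cc: "C + t \<cdot>\<^sub>m unitm no r p0 q0 \<in> carrier_mat no r" using dims by (auto simp: unitm_def)
    have "(H i - tf E A B (C + t \<cdot>\<^sub>m unitm no r p0 q0) (sp i)) $$ (p,q) = H i $$ (p,q) -
     (\<Sum>b<r. (\<Sum>a<r. of_real ((C + t \<cdot>\<^sub>m unitm no r p0 q0) $$ (p,a)) * R i $$ (a,b)) * of_real (B $$ (b,q)))"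
      unfolding tf_def Mi_def[symmetric] R_def[symmetric] sp_def[symmetric] by (rule tf_gen[OF i Cc dims(3) p q])
    also have "\<dots> = H i $$ (p,q) -
     (\<Sum>b<r. (CR i p b + (if p = p0 then of_real t * R i $$ (q0,b) else 0)) * of_real (B $$ (b,q)))"
    proof -
      have "\<And>b. (\<Sum>a<r. of_real ((C + t \<cdot>\<^sub>m unitm no r p0 q0) $$ (p,a)) * R i $$ (a,b)) =
         CR i p b + (if p = p0 then of_real t * R i $$ (q0,b) else 0)"
        unfolding CR_def using dims p q0
        by (auto simp: unitm_def distrib_right sum.distrib of_real_ifz sum_delta_mult if_distrib[of "\<lambda>x. x * _"] cong: if_cong)
      then show ?thesis by simp
    qed
    also have "\<dots> = X i p q - of_real t * (if p = p0 then RB i q0 q else 0) / (1 - of_real t * 0)"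
      unfolding X_entry[OF i p q] RB_def
      by (auto simp: distrib_right sum.distrib sum_distrib_left mult.assoc)
    finally show "(H i - tf E A B (C + t \<cdot>\<^sub>m unitm no r p0 q0) (sp i)) $$ (p,q) = X i p q - of_real t * (if p = p0 then RB i q0 q else 0) / (1 - of_real t * 0)" .
  qed
qed simp

lemma pertB:
  assumes a0: "a0 < r" and b0: "b0 < ni"
  shows "(\<Sum>i<N. \<rho> i * (\<Sum>p<no. \<Sum>q<ni. Re (cnj (X i p q) * (if q = b0 then CR i p a0 else 0)))) = 0"
proof (rule pert[where Ap="\<lambda>t. A" and Bp="\<lambda>t. B + t \<cdot>\<^sub>m unitm r ni a0 b0" and Cp="\<lambda>t. C" and \<beta>="\<lambda>i. 0" and d=1])
  show "\<forall>t. \<bar>t\<bar> < 1 \<longrightarrow> admissible N \<omega> r ni no E A (B + t \<cdot>\<^sub>m unitm r ni a0 b0) C"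
    using adm dims unfolding admissible_def by (auto simp: unitm_def)
  show "\<forall>t. rfrob_sq (E - E) + rfrob_sq (A - A) + rfrob_sq (B + t \<cdot>\<^sub>m unitm r ni a0 b0 - B) + rfrob_sq (C - C) = t\<^sup>2"
    using rfrob_unit[OF dims(3) a0 b0] by (simp add: rfrob_zero)
  show "\<forall>t. \<bar>t\<bar> < 1 \<longrightarrow> t \<noteq> 0 \<longrightarrow> (\<forall>i<N. \<forall>p<no. \<forall>q<ni.
      (H i - tf E A (B + t \<cdot>\<^sub>m unitm r ni a0 b0) C (sp i)) $$ (p,q) = X i p q - of_real t * (if q = b0 then CR i p a0 else 0) / (1 - of_real t * 0))"
  proof (intro allI impI)
    fix t :: real and i p q assume i: "i < N" and p: "p < no" and q: "q < ni"
    have Bc: "B + t \<cdot>\<^sub>m unitm r ni a0 b0 \<in> carrier_mat r ni" using dims by (auto simp: unitm_def)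
    have "(H i - tf E A (B + t \<cdot>\<^sub>m unitm r ni a0 b0) C (sp i)) $$ (p,q) = H i $$ (p,q) -
     (\<Sum>b<r. (\<Sum>a<r. of_real (C $$ (p,a)) * R i $$ (a,b)) * of_real ((B + t \<cdot>\<^sub>m unitm r ni a0 b0) $$ (b,q)))"
      unfolding tf_def Mi_def[symmetric] R_def[symmetric] sp_def[symmetric] by (rule tf_gen[OF i dims(4) Bc p q])
    also have "\<dots> = H i $$ (p,q) -
     (\<Sum>b<r. CR i p b * of_real (B $$ (b,q)) + CR i p b * (if b = a0 then 1 else 0) * (if q = b0 then of_real t else 0))"
      unfolding CR_def using dims q a0
      by (intro arg_cong[where f="\<lambda>x. H i $$ (p,q) - x"] sum.cong refl) (auto simp: unitm_def distrib_left)
    also have "\<dots> = X i p q - of_real t * (if q = b0 then CR i p a0 else 0) / (1 - of_real t * 0)"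
    proof -
      have "(\<Sum>b<r. CR i p b * (if b = a0 then 1 else 0) * (if q = b0 then of_real t else 0)) =
           (if q = b0 then of_real t else 0) * CR i p a0"
        using sum_delta_mult[OF a0, of "(if q = b0 then of_real t else 0)" "CR i p"]
        by (simp add: mult.commute mult.left_commute)
      then show ?thesis unfolding X_entry[OF i p q] by (simp add: sum.distrib)
    qed
    finally show "(H i - tf E A (B + t \<cdot>\<^sub>m unitm r ni a0 b0) C (sp i)) $$ (p,q) = X i p q - of_real t * (if q = b0 then CR i p a0 else 0) / (1 - of_real t * 0)" .
  qed
qed simp

lemma MR_entry: "i < N \<Longrightarrow> x < r \<Longrightarrow> y < r \<Longrightarrow> (\<Sum>m<r. Mi i $$ (x,m) * R i $$ (m,y)) = (if x = y then 1 else 0)"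
proof -
  assume i: "i < N" and x: "x < r" and y: "y < r"
  have "(Mi i * R i) $$ (x,y) = (\<Sum>m<r. Mi i $$ (x,m) * R i $$ (m,y))"
    by (rule mult_entry) (use R_props[OF i] Mi_carrier x y in auto)
  moreover have "(Mi i * R i) $$ (x,y) = (if x = y then 1 else 0)" using R_props[OF i] x y by auto
  ultimately show ?thesis by simp
qed

lemma pertA:
  assumes a0: "a0 < r" and b0: "b0 < r"
  shows "(\<Sum>i<N. \<rho> i * (\<Sum>p<no. \<Sum>q<ni. Re (cnj (X i p q) * (CR i p a0 * RB i b0 q)))) = 0"
proof -
  define \<beta> where "\<beta> i = R i $$ (b0,a0)" for i
  define d where "d = 1 / (1 + (\<Sum>i<N. cmod (\<beta> i)))"
  have sp: "(\<Sum>i<N. cmod (\<beta> i)) \<ge> 0" by (simp add: sum_nonneg)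
  have d: "d > 0" unfolding d_def using sp by auto
  have nz: "1 - of_real t * \<beta> i \<noteq> 0" if t: "\<bar>t\<bar> < d" and i: "i < N" for t i
  proof
    assume eq: "1 - of_real t * \<beta> i = 0"
    have "cmod (\<beta> i) \<le> (\<Sum>i<N. cmod (\<beta> i))" using i by (intro member_le_sum) auto
    then have "\<bar>t\<bar> * cmod (\<beta> i) \<le> \<bar>t\<bar> * (1 + (\<Sum>i<N. cmod (\<beta> i)))"
      by (intro mult_left_mono) auto
    also have "\<dots> < d * (1 + (\<Sum>i<N. cmod (\<beta> i)))" using t sp by (intro mult_strict_right_mono) auto
    also have "\<dots> = 1" unfolding d_def using sp by auto
    finally have "cmod (of_real t * \<beta> i) < 1" by (simp add: norm_mult)
    moreover have "of_real t * \<beta> i = 1" using eq by simp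
    ultimately show False by simp
  qed
  define Z where "Z t i = mat r r (\<lambda>(x,y). R i $$ (x,y) + of_real t * R i $$ (x,a0) * R i $$ (b0,y) / (1 - of_real t * \<beta> i))" for t i
  define Mp where "Mp t i = sp i \<cdot>\<^sub>m cplx E - cplx (A + t \<cdot>\<^sub>m unitm r r a0 b0)" for t i
  have Mpc: "Mp t i \<in> carrier_mat r r" for t i unfolding Mp_def using dims by (auto simp: unitm_def)
  have Mp_entry: "Mp t i $$ (x,m) = Mi i $$ (x,m) - (if x = a0 \<and> m = b0 then of_real t else 0)"
    if "x < r" "m < r" for t i x m
    unfolding Mp_def using that dims by (auto simp: unitm_def Mi_entry algebra_simps)
  have inv: "invertible_mat (Mp t i) \<and> minv (Mp t i) = Z t i" if t: "\<bar>t\<bar> < d" and i: "i < N" for t i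
  proof (rule minv_unique[OF Mpc])
    show Zc: "Z t i \<in> carrier_mat r r" unfolding Z_def by auto
    define c where "c = of_real t / (1 - of_real t * \<beta> i)"
    have nzi: "1 - of_real t * \<beta> i \<noteq> 0" using nz[OF t i] .
    have cc: "c - of_real t - of_real t * c * \<beta> i = 0"
      unfolding c_def using nzi by (simp add: field_simps)
    show "Mp t i * Z t i = 1\<^sub>m r"
    proof (rule eq_matI)
      fix x y assume x: "x < dim_row (1\<^sub>m r :: complex mat)" and y: "y < dim_col (1\<^sub>m r :: complex mat)"
      then have x: "x < r" and y: "y < r" by auto
      have Zent: "Z t i $$ (m,y) = R i $$ (m,y) + c * R i $$ (m,a0) * R i $$ (b0,y)" if "m < r" for m
        unfolding Z_def c_def using that y by auto
      have "(Mp t i * Z t i) $$ (x,y) = (\<Sum>m<r. Mp t i $$ (x,m) * Z t i $$ (m,y))"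
        by (rule mult_entry) (use Mpc Zc x y in auto)
      also have "\<dots> = (\<Sum>m<r. Mi i $$ (x,m) * (R i $$ (m,y) + c * R i $$ (m,a0) * R i $$ (b0,y))
                 - (if x = a0 \<and> m = b0 then of_real t else 0) * (R i $$ (m,y) + c * R i $$ (m,a0) * R i $$ (b0,y)))"
        by (rule sum.cong[OF refl]) (simp add: Mp_entry Zent x left_diff_distrib)
      also have "\<dots> = (\<Sum>m<r. Mi i $$ (x,m) * R i $$ (m,y)) + c * (\<Sum>m<r. Mi i $$ (x,m) * R i $$ (m,a0)) * R i $$ (b0,y)
                 - (\<Sum>m<r. (if x = a0 \<and> m = b0 then of_real t else 0) * (R i $$ (m,y) + c * R i $$ (m,a0) * R i $$ (b0,y)))"
        by (simp add: sum_subtractf sum.distrib distrib_left sum_distrib_left sum_distrib_right mult.assoc mult.left_commute)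
      also have "(\<Sum>m<r. (if x = a0 \<and> m = b0 then of_real t else 0) * (R i $$ (m,y) + c * R i $$ (m,a0) * R i $$ (b0,y)))
          = (if x = a0 then of_real t * (R i $$ (b0,y) + c * R i $$ (b0,a0) * R i $$ (b0,y)) else 0)"
      proof -
        have "(\<Sum>m<r. (if x = a0 \<and> m = b0 then of_real t else 0) * (R i $$ (m,y) + c * R i $$ (m,a0) * R i $$ (b0,y)))
           = (\<Sum>m<r. if m = b0 then (if x = a0 then of_real t * (R i $$ (m,y) + c * R i $$ (m,a0) * R i $$ (b0,y)) else 0) else 0)"
          by (rule sum.cong) auto
        also have "\<dots> = (if x = a0 then of_real t * (R i $$ (b0,y) + c * R i $$ (b0,a0) * R i $$ (b0,y)) else 0)"
          using b0 by (subst sum.delta) auto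
        finally show ?thesis .
      qed
      also have "(\<Sum>m<r. Mi i $$ (x,m) * R i $$ (m,y)) + c * (\<Sum>m<r. Mi i $$ (x,m) * R i $$ (m,a0)) * R i $$ (b0,y)
          - (if x = a0 then of_real t * (R i $$ (b0,y) + c * R i $$ (b0,a0) * R i $$ (b0,y)) else 0)
          = (if x = y then 1 else 0) + (if x = a0 then (c - of_real t - of_real t * c * \<beta> i) * R i $$ (b0,y) else 0)"
        using MR_entry[OF i x y] MR_entry[OF i x a0] unfolding \<beta>_def by (auto simp: algebra_simps)
      also have "\<dots> = 1\<^sub>m r $$ (x,y)" using cc x y by simp
      finally show "(Mp t i * Z t i) $$ (x,y) = 1\<^sub>m r $$ (x,y)" .
    qed (use Mpc[of t i] Zc in auto)
  qed
  show ?thesis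
  proof (rule pert[where Ap="\<lambda>t. A + t \<cdot>\<^sub>m unitm r r a0 b0" and Bp="\<lambda>t. B" and Cp="\<lambda>t. C" and \<beta>=\<beta> and d=d, OF d])
    show "\<forall>t. \<bar>t\<bar> < d \<longrightarrow> admissible N \<omega> r ni no E (A + t \<cdot>\<^sub>m unitm r r a0 b0) B C"
      using adm dims inv unfolding admissible_def Mp_def sp_def by (auto simp: unitm_def)
    show "\<forall>t. rfrob_sq (E - E) + rfrob_sq (A + t \<cdot>\<^sub>m unitm r r a0 b0 - A) + rfrob_sq (B - B) + rfrob_sq (C - C) = t\<^sup>2"
      using rfrob_unit[OF dims(2) a0 b0] by (simp add: rfrob_zero)
    show "\<forall>t. \<bar>t\<bar> < d \<longrightarrow> t \<noteq> 0 \<longrightarrow> (\<forall>i<N. \<forall>p<no. \<forall>q<ni.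
      (H i - tf E (A + t \<cdot>\<^sub>m unitm r r a0 b0) B C (sp i)) $$ (p,q) = X i p q - of_real t * (CR i p a0 * RB i b0 q) / (1 - of_real t * \<beta> i))"
    proof (intro allI impI)
      fix t :: real and i p q assume t: "\<bar>t\<bar> < d" and i: "i < N" and p: "p < no" and q: "q < ni"
      define c where "c = of_real t / (1 - of_real t * \<beta> i)"
      have Zc: "Z t i \<in> carrier_mat r r" unfolding Z_def by auto
      have tfe: "tf E (A + t \<cdot>\<^sub>m unitm r r a0 b0) B C (sp i) = cplx C * Z t i * cplx B"
        using inv[OF t i] unfolding tf_def Mp_def by simp
      have "(cplx C * Z t i * cplx B) $$ (p,q) = (\<Sum>b<r. (\<Sum>a<r. cplx C $$ (p,a) * Z t i $$ (a,b)) * cplx B $$ (b,q))"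
        by (rule triple_entry[of _ no r _ r _ ni]) (use Zc dims p q in auto)
      also have "\<dots> = (\<Sum>b<r. (CR i p b + c * CR i p a0 * R i $$ (b0,b)) * of_real (B $$ (b,q)))"
      proof (rule sum.cong[OF refl])
        fix b assume "b \<in> {..<r}"
        then have b: "b < r" by simp
        have "(\<Sum>a<r. cplx C $$ (p,a) * Z t i $$ (a,b)) = (\<Sum>a<r. of_real (C $$ (p,a)) * R i $$ (a,b) + c * (of_real (C $$ (p,a)) * R i $$ (a,a0)) * R i $$ (b0,b))"
          by (rule sum.cong[OF refl]) (use dims p b in \<open>auto simp: Z_def c_def algebra_simps\<close>)
        also have "\<dots> = CR i p b + c * CR i p a0 * R i $$ (b0,b)"
          unfolding CR_def by (simp add: sum.distrib sum_distrib_left sum_distrib_right)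
        finally show "(\<Sum>a<r. cplx C $$ (p,a) * Z t i $$ (a,b)) * cplx B $$ (b,q) = (CR i p b + c * CR i p a0 * R i $$ (b0,b)) * of_real (B $$ (b,q))"
          using dims b q by simp
      qed
      also have "\<dots> = (\<Sum>b<r. CR i p b * of_real (B $$ (b,q))) + c * CR i p a0 * RB i b0 q"
        unfolding RB_def by (simp add: sum.distrib sum_distrib_left distrib_right mult.assoc)
      finally have "(cplx C * Z t i * cplx B) $$ (p,q) = (\<Sum>b<r. CR i p b * of_real (B $$ (b,q))) + c * CR i p a0 * RB i b0 q" .
      moreover have "dim_row (cplx C * Z t i * cplx B) = no" "dim_col (cplx C * Z t i * cplx B) = ni" using Zc dims by auto
      ultimately show "(H i - tf E (A + t \<cdot>\<^sub>m unitm r r a0 b0) B C (sp i)) $$ (p,q) = X i p q - of_real t * (CR i p a0 * RB i b0 q) / (1 - of_real t * \<beta> i)"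
        unfolding tfe X_entry[OF i p q] c_def using p q by (simp add: mult.assoc)
    qed
  qed
qed

lemma sig_props: "\<forall>i<N. \<sigma> i < N \<and> \<sigma> (\<sigma> i) = i"
  using sig sigsig by auto

lemma KC_zero:
  assumes p0: "p0 < no" and q0: "q0 < r"
  shows "(\<Sum>i<N. of_real (\<rho> i) * (\<Sum>q<ni. cnj (X i p0 q) * RB i q0 q)) = 0"
proof (rule complex_eqI)
  have "\<And>i. (\<Sum>p<no. \<Sum>q<ni. Re (cnj (X i p q) * (if p = p0 then RB i q0 q else 0)))
         = (\<Sum>p<no. if p = p0 then (\<Sum>q<ni. Re (cnj (X i p q) * RB i q0 q)) else 0)"
    by (rule sum.cong) auto
  also have "\<And>i. (\<Sum>p<no. if p = p0 then (\<Sum>q<ni. Re (cnj (X i p q) * RB i q0 q)) else 0)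
         = (\<Sum>q<ni. Re (cnj (X i p0 q) * RB i q0 q))"
    using p0 by (subst sum.delta) auto
  finally have e: "\<And>i. (\<Sum>p<no. \<Sum>q<ni. Re (cnj (X i p q) * (if p = p0 then RB i q0 q else 0)))
         = (\<Sum>q<ni. Re (cnj (X i p0 q) * RB i q0 q))" .
  show "Re (\<Sum>i<N. of_real (\<rho> i) * (\<Sum>q<ni. cnj (X i p0 q) * RB i q0 q)) = Re 0"
    using pertC[OF p0 q0] unfolding e by (simp add: Re_sum)
  show "Im (\<Sum>i<N. of_real (\<rho> i) * (\<Sum>q<ni. cnj (X i p0 q) * RB i q0 q)) = Im 0"
  proof -
    have "\<forall>i<N. of_real (\<rho> (\<sigma> i)) * (\<Sum>q<ni. cnj (X (\<sigma> i) p0 q) * RB (\<sigma> i) q0 q)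
       = cnj (of_real (\<rho> i) * (\<Sum>q<ni. cnj (X i p0 q) * RB i q0 q))"
      using sig X_sig p0 RB_sig q0 by simp
    from im_sum_involution[OF sig_props this] show ?thesis by simp
  qed
qed

lemma KB_zero:
  assumes a0: "a0 < r" and b0: "b0 < ni"
  shows "(\<Sum>i<N. of_real (\<rho> i) * (\<Sum>p<no. cnj (X i p b0) * CR i p a0)) = 0"
proof (rule complex_eqI)
  have "\<And>i p. (\<Sum>q<ni. Re (cnj (X i p q) * (if q = b0 then CR i p a0 else 0)))
         = (\<Sum>q<ni. if q = b0 then Re (cnj (X i p q) * CR i p a0) else 0)"
    by (rule sum.cong) auto
  also have "\<And>i p. (\<Sum>q<ni. if q = b0 then Re (cnj (X i p q) * CR i p a0) else 0)
         = Re (cnj (X i p b0) * CR i p a0)"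
    using b0 by (subst sum.delta) auto
  finally have e: "\<And>i p. (\<Sum>q<ni. Re (cnj (X i p q) * (if q = b0 then CR i p a0 else 0)))
         = Re (cnj (X i p b0) * CR i p a0)" .
  show "Re (\<Sum>i<N. of_real (\<rho> i) * (\<Sum>p<no. cnj (X i p b0) * CR i p a0)) = Re 0"
    using pertB[OF a0 b0] unfolding e by (simp add: Re_sum)
  show "Im (\<Sum>i<N. of_real (\<rho> i) * (\<Sum>p<no. cnj (X i p b0) * CR i p a0)) = Im 0"
  proof -
    have "\<forall>i<N. of_real (\<rho> (\<sigma> i)) * (\<Sum>p<no. cnj (X (\<sigma> i) p b0) * CR (\<sigma> i) p a0)
       = cnj (of_real (\<rho> i) * (\<Sum>p<no. cnj (X i p b0) * CR i p a0))"
      using sig X_sig b0 CR_sig a0 by simp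
    from im_sum_involution[OF sig_props this] show ?thesis by simp
  qed
qed

lemma KA_zero:
  assumes a0: "a0 < r" and b0: "b0 < r"
  shows "(\<Sum>i<N. of_real (\<rho> i) * (\<Sum>p<no. \<Sum>q<ni. cnj (X i p q) * (CR i p a0 * RB i b0 q))) = 0"
proof (rule complex_eqI)
  show "Re (\<Sum>i<N. of_real (\<rho> i) * (\<Sum>p<no. \<Sum>q<ni. cnj (X i p q) * (CR i p a0 * RB i b0 q))) = Re 0"
    using pertA[OF a0 b0] by (simp add: Re_sum)
  show "Im (\<Sum>i<N. of_real (\<rho> i) * (\<Sum>p<no. \<Sum>q<ni. cnj (X i p q) * (CR i p a0 * RB i b0 q))) = Im 0"
  proof -
    have "\<forall>i<N. of_real (\<rho> (\<sigma> i)) * (\<Sum>p<no. \<Sum>q<ni. cnj (X (\<sigma> i) p q) * (CR (\<sigma> i) p a0 * RB (\<sigma> i) b0 q))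
       = cnj (of_real (\<rho> i) * (\<Sum>p<no. \<Sum>q<ni. cnj (X i p q) * (CR i p a0 * RB i b0 q)))"
      using sig X_sig CR_sig RB_sig a0 b0 by simp
    from im_sum_involution[OF sig_props this] show ?thesis by simp
  qed
qed

definition P where "P = mat_adjoint S"
definition Q where "Q = cplx E * T"
definition Lm where "Lm = mat r r (\<lambda>(i,j). if i = j then lam i else 0)"

lemma P_carrier: "P \<in> carrier_mat r r" unfolding P_def using S_T adj_carrier by auto
lemma Q_carrier: "Q \<in> carrier_mat r r" unfolding Q_def using S_T dims by auto
lemma Lm_carrier: "Lm \<in> carrier_mat r r" unfolding Lm_def by auto
lemma PE_carrier: "P * cplx E \<in> carrier_mat r r" using P_carrier dims by auto

lemma PE_T: "(P * cplx E) * T = 1\<^sub>m r" using SET unfolding P_def .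
lemma T_PE: "T * (P * cplx E) = 1\<^sub>m r"
  using mat_mult_left_right_inverse[OF PE_carrier S_T(2) PE_T] .
lemma cE: "cplx E \<in> carrier_mat r r" and cA: "cplx A \<in> carrier_mat r r" using dims by auto

lemma P_Q: "P * Q = 1\<^sub>m r"
  unfolding Q_def using PE_T assoc_mult_mat[OF P_carrier cE S_T(2)] by auto
lemma Q_P: "Q * P = 1\<^sub>m r"
  using mat_mult_left_right_inverse[OF P_carrier Q_carrier P_Q] .

lemma PAT: "P * cplx A * T = Lm" using SAT unfolding P_def Lm_def .

lemma PA: "P * cplx A = Lm * (P * cplx E)"
proof -
  have PAc: "P * cplx A \<in> carrier_mat r r" using P_carrier dims by auto
  have "P * cplx A = (P * cplx A) * (T * (P * cplx E))" using T_PE right_mult_one_mat[OF PAc] by simp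
  also have "\<dots> = (P * cplx A * T) * (P * cplx E)"
    using assoc_mult_mat[OF PAc S_T(2) PE_carrier] by simp
  finally show ?thesis using PAT by simp
qed

lemma AT: "cplx A * T = Q * Lm"
proof -
  have ATc: "cplx A * T \<in> carrier_mat r r" using S_T dims by auto
  have "cplx A * T = (Q * P) * (cplx A * T)" using Q_P left_mult_one_mat[OF ATc] by simp
  also have "\<dots> = Q * (P * (cplx A * T))"
    using assoc_mult_mat[OF Q_carrier P_carrier ATc] by simp
  also have "P * (cplx A * T) = P * cplx A * T"
    using assoc_mult_mat[OF P_carrier cA S_T(2)] by simp
  finally show ?thesis using PAT by simp
qed

lemma diag_left: "Y \<in> carrier_mat r n \<Longrightarrow> k < r \<Longrightarrow> m < n \<Longrightarrow> (Lm * Y) $$ (k,m) = lam k * Y $$ (k,m)"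
proof -
  assume Y: "Y \<in> carrier_mat r n" and k: "k < r" and m: "m < n"
  have "(Lm * Y) $$ (k,m) = (\<Sum>l<r. Lm $$ (k,l) * Y $$ (l,m))"
    by (rule mult_entry) (use Y k m Lm_carrier in auto)
  also have "\<dots> = (\<Sum>l<r. if l = k then lam k * Y $$ (k,m) else 0)"
    by (rule sum.cong) (use k in \<open>auto simp: Lm_def\<close>)
  also have "\<dots> = lam k * Y $$ (k,m)" using k by (subst sum.delta) auto
  finally show ?thesis .
qed

lemma diag_right: "Y \<in> carrier_mat n r \<Longrightarrow> k < r \<Longrightarrow> x < n \<Longrightarrow> (Y * Lm) $$ (x,k) = Y $$ (x,k) * lam k"
proof -
  assume Y: "Y \<in> carrier_mat n r" and k: "k < r" and x: "x < n"
  have "(Y * Lm) $$ (x,k) = (\<Sum>l<r. Y $$ (x,l) * Lm $$ (l,k))"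
    by (rule mult_entry) (use Y k x Lm_carrier in auto)
  also have "\<dots> = (\<Sum>l<r. if l = k then Y $$ (x,k) * lam k else 0)"
    by (rule sum.cong) (use k in \<open>auto simp: Lm_def\<close>)
  also have "\<dots> = Y $$ (x,k) * lam k" using k by (subst sum.delta) auto
  finally show ?thesis .
qed

lemma PMi_entry: "k < r \<Longrightarrow> m < r \<Longrightarrow> (P * Mi i) $$ (k,m) = (sp i - lam k) * (P * cplx E) $$ (k,m)"
proof -
  assume k: "k < r" and m: "m < r"
  have "(P * Mi i) $$ (k,m) = (\<Sum>x<r. P $$ (k,x) * Mi i $$ (x,m))"
    by (rule mult_entry) (use P_carrier Mi_carrier k m in auto)
  also have "\<dots> = sp i * (\<Sum>x<r. P $$ (k,x) * cplx E $$ (x,m)) - (\<Sum>x<r. P $$ (k,x) * cplx A $$ (x,m))"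
    using dims m by (simp add: Mi_entry sum_distrib_left sum_subtractf algebra_simps)
  also have "(\<Sum>x<r. P $$ (k,x) * cplx E $$ (x,m)) = (P * cplx E) $$ (k,m)"
    by (rule mult_entry[symmetric]) (use P_carrier dims k m in auto)
  also have "(\<Sum>x<r. P $$ (k,x) * cplx A $$ (x,m)) = (P * cplx A) $$ (k,m)"
    by (rule mult_entry[symmetric]) (use P_carrier dims k m in auto)
  also have "(P * cplx A) $$ (k,m) = lam k * (P * cplx E) $$ (k,m)"
    unfolding PA using diag_left[OF PE_carrier k m] .
  finally show ?thesis by (simp add: algebra_simps)
qed

lemma MiT_entry: "k < r \<Longrightarrow> x < r \<Longrightarrow> (Mi i * T) $$ (x,k) = (sp i - lam k) * Q $$ (x,k)"
proof -
  assume k: "k < r" and x: "x < r"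
  have "(Mi i * T) $$ (x,k) = (\<Sum>m<r. Mi i $$ (x,m) * T $$ (m,k))"
    by (rule mult_entry) (use S_T Mi_carrier k x in auto)
  also have "\<dots> = sp i * (\<Sum>m<r. cplx E $$ (x,m) * T $$ (m,k)) - (\<Sum>m<r. cplx A $$ (x,m) * T $$ (m,k))"
    using dims x by (simp add: Mi_entry sum_distrib_left sum_subtractf algebra_simps)
  also have "(\<Sum>m<r. cplx E $$ (x,m) * T $$ (m,k)) = Q $$ (x,k)"
    unfolding Q_def by (rule mult_entry[symmetric]) (use S_T dims k x in auto)
  also have "(\<Sum>m<r. cplx A $$ (x,m) * T $$ (m,k)) = (cplx A * T) $$ (x,k)"
    by (rule mult_entry[symmetric]) (use S_T dims k x in auto)
  also have "(cplx A * T) $$ (x,k) = Q $$ (x,k) * lam k"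
    unfolding AT using diag_right[OF Q_carrier k x] .
  finally show ?thesis by (simp add: algebra_simps)
qed

lemma sp_ne: assumes i: "i < N" and k: "k < r" shows "sp i \<noteq> lam k"
proof
  assume eq: "sp i = lam k"
  have Rc: "R i \<in> carrier_mat r r" and MR: "Mi i * R i = 1\<^sub>m r" using R_props[OF i] by auto
  have PMc: "P * Mi i \<in> carrier_mat r r" using P_carrier Mi_carrier by auto
  have "P = P * (Mi i * R i)" using MR P_carrier by simp
  also have "\<dots> = (P * Mi i) * R i" using assoc_mult_mat[OF P_carrier Mi_carrier Rc] by simp
  finally have PP: "P = (P * Mi i) * R i" .
  have P0: "P $$ (k,m) = 0" if m: "m < r" for m
  proof -
    have "P $$ (k,m) = (\<Sum>x<r. (P * Mi i) $$ (k,x) * R i $$ (x,m))"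
      by (subst PP, rule mult_entry) (use PMc Rc k m in auto)
    also have "\<dots> = 0" using eq k by (simp add: PMi_entry)
    finally show ?thesis .
  qed
  have "(P * Q) $$ (k,k) = (\<Sum>m<r. P $$ (k,m) * Q $$ (m,k))"
    by (rule mult_entry) (use P_carrier Q_carrier k in auto)
  also have "\<dots> = 0" using P0 by simp
  finally show False using P_Q k by simp
qed

lemma PER_entry: assumes i: "i < N" and k: "k < r" and m: "m < r"
  shows "(\<Sum>x<r. (P * cplx E) $$ (k,x) * R i $$ (x,m)) = P $$ (k,m) / (sp i - lam k)"
proof -
  have Rc: "R i \<in> carrier_mat r r" and MR: "Mi i * R i = 1\<^sub>m r" using R_props[OF i] by auto
  have PMc: "P * Mi i \<in> carrier_mat r r" using P_carrier Mi_carrier by auto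
  have "P = P * (Mi i * R i)" using MR P_carrier by simp
  also have "\<dots> = (P * Mi i) * R i" using assoc_mult_mat[OF P_carrier Mi_carrier Rc] by simp
  finally have PP: "P = (P * Mi i) * R i" .
  have "P $$ (k,m) = (\<Sum>x<r. (P * Mi i) $$ (k,x) * R i $$ (x,m))"
    by (subst PP, rule mult_entry) (use PMc Rc k m in auto)
  also have "\<dots> = (sp i - lam k) * (\<Sum>x<r. (P * cplx E) $$ (k,x) * R i $$ (x,m))"
    using k by (simp add: PMi_entry sum_distrib_left mult.assoc)
  finally show ?thesis using sp_ne[OF i k] by (simp add: field_simps)
qed

lemma RQ_entry: assumes i: "i < N" and k: "k < r" and j: "j < r"
  shows "(\<Sum>x<r. R i $$ (j,x) * Q $$ (x,k)) = T $$ (j,k) / (sp i - lam k)"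
proof -
  have Rc: "R i \<in> carrier_mat r r" and RM: "R i * Mi i = 1\<^sub>m r" using R_props[OF i] by auto
  have MTc: "Mi i * T \<in> carrier_mat r r" by (rule mult_carrier_mat[OF Mi_carrier S_T(2)])
  have "T = (R i * Mi i) * T" using RM S_T by simp
  also have "\<dots> = R i * (Mi i * T)" using assoc_mult_mat[OF Rc Mi_carrier S_T(2)] by simp
  finally have TT: "T = R i * (Mi i * T)" .
  have "T $$ (j,k) = (\<Sum>x<r. R i $$ (j,x) * (Mi i * T) $$ (x,k))"
    by (subst TT, rule mult_entry) (use MTc Rc k j in auto)
  also have "\<dots> = (sp i - lam k) * (\<Sum>x<r. R i $$ (j,x) * Q $$ (x,k))"
    using k by (simp add: MiT_entry sum_distrib_left algebra_simps)
  finally show ?thesis using sp_ne[OF i k] by (simp add: field_simps)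
qed

definition bv where "bv k q = (\<Sum>m<r. of_real (B $$ (m,q)) * S $$ (m,k))"
definition cv where "cv k p = (\<Sum>j<r. of_real (C $$ (p,j)) * T $$ (j,k))"

lemma P_entry: "k < r \<Longrightarrow> m < r \<Longrightarrow> P $$ (k,m) = cnj (S $$ (m,k))"
  unfolding P_def using adj_entry S_T by auto

lemma ell: assumes i: "i < N" and k: "k < r" and q: "q < ni"
  shows "(\<Sum>m<r. (P * cplx E) $$ (k,m) * RB i m q) = cnj (bv k q) / (sp i - lam k)"
proof -
  have "(\<Sum>m<r. (P * cplx E) $$ (k,m) * RB i m q) = (\<Sum>n<r. (\<Sum>m<r. (P * cplx E) $$ (k,m) * R i $$ (m,n)) * of_real (B $$ (n,q)))"
    unfolding RB_def by (simp add: sum_distrib_left sum_distrib_right mult.assoc) (rule sum.swap)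
  also have "\<dots> = (\<Sum>n<r. P $$ (k,n) / (sp i - lam k) * of_real (B $$ (n,q)))"
    by (rule sum.cong) (auto simp: PER_entry[OF i k])
  also have "\<dots> = cnj (bv k q) / (sp i - lam k)"
    unfolding bv_def using k by (simp add: P_entry sum_divide_distrib mult.commute)
  finally show ?thesis .
qed

lemma tau: assumes i: "i < N" and k: "k < r" and p: "p < no"
  shows "(\<Sum>a<r. CR i p a * Q $$ (a,k)) = cv k p / (sp i - lam k)"
proof -
  have "(\<Sum>a<r. CR i p a * Q $$ (a,k)) = (\<Sum>m<r. of_real (C $$ (p,m)) * (\<Sum>a<r. R i $$ (m,a) * Q $$ (a,k)))"
    unfolding CR_def by (simp add: sum_distrib_left sum_distrib_right mult.assoc) (rule sum.swap)
  also have "\<dots> = (\<Sum>m<r. of_real (C $$ (p,m)) * (T $$ (m,k) / (sp i - lam k)))"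
    by (rule sum.cong) (auto simp: RQ_entry[OF i k])
  also have "\<dots> = cv k p / (sp i - lam k)"
    unfolding cv_def by (simp add: sum_divide_distrib)
  finally show ?thesis .
qed

lemma cnj_den: "cnj (sp i - lam k) = - cnj (lam k) - sp i"
  unfolding sp_def by (simp add: complex_eq_iff)

lemma cnj_den2: "cnj (sp i) - cnj (lam k) = - cnj (lam k) - sp i"
  unfolding sp_def by (simp add: complex_eq_iff)

lemma F1: assumes k: "k < r" and p: "p < no"
  shows "(\<Sum>i<N. of_real (\<rho> i) / (- cnj (lam k) - sp i) * (\<Sum>q<ni. X i p q * bv k q)) = 0"
proof -
  have "0 = (\<Sum>m<r. (P * cplx E) $$ (k,m) * (\<Sum>i<N. of_real (\<rho> i) * (\<Sum>q<ni. cnj (X i p q) * RB i m q)))"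
    using KC_zero[OF p] by simp
  also have "\<dots> = (\<Sum>i<N. of_real (\<rho> i) * (\<Sum>q<ni. cnj (X i p q) * (\<Sum>m<r. (P * cplx E) $$ (k,m) * RB i m q)))"
    by (simp add: sum_distrib_left mult_ac) (subst sum.swap, rule sum.cong[OF refl], subst sum.swap, simp)
  also have "\<dots> = (\<Sum>i<N. of_real (\<rho> i) * (\<Sum>q<ni. cnj (X i p q) * (cnj (bv k q) / (sp i - lam k))))"
    using ell k by (auto intro!: sum.cong)
  finally have "cnj 0 = cnj (\<Sum>i<N. of_real (\<rho> i) * (\<Sum>q<ni. cnj (X i p q) * (cnj (bv k q) / (sp i - lam k))))"
    by simp
  also have "\<dots> = (\<Sum>i<N. of_real (\<rho> i) / (- cnj (lam k) - sp i) * (\<Sum>q<ni. X i p q * bv k q))"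
    by (simp add: cnj_den cnj_den2 sum_divide_distrib sum_distrib_left)
  finally show ?thesis by simp
qed

lemma F2: assumes k: "k < r" and q: "q < ni"
  shows "(\<Sum>i<N. of_real (\<rho> i) / (- cnj (lam k) - sp i) * (\<Sum>p<no. cnj (cv k p) * X i p q)) = 0"
proof -
  have "0 = (\<Sum>a<r. Q $$ (a,k) * (\<Sum>i<N. of_real (\<rho> i) * (\<Sum>p<no. cnj (X i p q) * CR i p a)))"
    using KB_zero[OF _ q] by simp
  also have "\<dots> = (\<Sum>a<r. \<Sum>i<N. \<Sum>p<no. Q $$ (a,k) * (of_real (\<rho> i) * (cnj (X i p q) * CR i p a)))"
    by (simp only: sum_distrib_left)
  also have "\<dots> = (\<Sum>i<N. \<Sum>p<no. \<Sum>a<r. Q $$ (a,k) * (of_real (\<rho> i) * (cnj (X i p q) * CR i p a)))"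
    by (rule swap2)
  also have "\<dots> = (\<Sum>i<N. of_real (\<rho> i) * (\<Sum>p<no. cnj (X i p q) * (\<Sum>a<r. CR i p a * Q $$ (a,k))))"
    by (simp add: sum_distrib_left mult_ac)
  also have "\<dots> = (\<Sum>i<N. of_real (\<rho> i) * (\<Sum>p<no. cnj (X i p q) * (cv k p / (sp i - lam k))))"
    using tau k by (auto intro!: sum.cong)
  finally have "cnj 0 = cnj (\<Sum>i<N. of_real (\<rho> i) * (\<Sum>p<no. cnj (X i p q) * (cv k p / (sp i - lam k))))"
    by simp
  also have "\<dots> = (\<Sum>i<N. of_real (\<rho> i) / (- cnj (lam k) - sp i) * (\<Sum>p<no. cnj (cv k p) * X i p q))"
    by (simp add: cnj_den cnj_den2 sum_divide_distrib sum_distrib_left mult_ac)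
  finally show ?thesis by simp
qed

lemma F3: assumes k: "k < r"
  shows "(\<Sum>i<N. of_real (\<rho> i) / (- cnj (lam k) - sp i)\<^sup>2 * (\<Sum>p<no. \<Sum>q<ni. cnj (cv k p) * X i p q * bv k q)) = 0"
proof -
  have step1: "(\<Sum>b<r. (P * cplx E) $$ (k,b) * (\<Sum>i<N. of_real (\<rho> i) * (\<Sum>p<no. \<Sum>q<ni. cnj (X i p q) * (CR i p a * RB i b q))))
     = (\<Sum>i<N. of_real (\<rho> i) * (\<Sum>p<no. \<Sum>q<ni. cnj (X i p q) * CR i p a * (cnj (bv k q) / (sp i - lam k))))" for a
  proof -
    have "(\<Sum>b<r. (P * cplx E) $$ (k,b) * (\<Sum>i<N. of_real (\<rho> i) * (\<Sum>p<no. \<Sum>q<ni. cnj (X i p q) * (CR i p a * RB i b q))))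
      = (\<Sum>b<r. \<Sum>i<N. \<Sum>p<no. \<Sum>q<ni. (P * cplx E) $$ (k,b) * (of_real (\<rho> i) * (cnj (X i p q) * (CR i p a * RB i b q))))"
      by (simp only: sum_distrib_left)
    also have "\<dots> = (\<Sum>i<N. \<Sum>p<no. \<Sum>q<ni. \<Sum>b<r. (P * cplx E) $$ (k,b) * (of_real (\<rho> i) * (cnj (X i p q) * (CR i p a * RB i b q))))"
      by (rule swap3)
    also have "\<dots> = (\<Sum>i<N. of_real (\<rho> i) * (\<Sum>p<no. \<Sum>q<ni. cnj (X i p q) * CR i p a * (\<Sum>b<r. (P * cplx E) $$ (k,b) * RB i b q)))"
      by (simp add: sum_distrib_left mult_ac)
    also have "\<dots> = (\<Sum>i<N. of_real (\<rho> i) * (\<Sum>p<no. \<Sum>q<ni. cnj (X i p q) * CR i p a * (cnj (bv k q) / (sp i - lam k))))"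
      using ell k by (auto intro!: sum.cong)
    finally show ?thesis .
  qed
  have "0 = (\<Sum>a<r. Q $$ (a,k) * (\<Sum>b<r. (P * cplx E) $$ (k,b) * (\<Sum>i<N. of_real (\<rho> i) * (\<Sum>p<no. \<Sum>q<ni. cnj (X i p q) * (CR i p a * RB i b q)))))"
    using KA_zero by simp
  also have "\<dots> = (\<Sum>a<r. Q $$ (a,k) * (\<Sum>i<N. of_real (\<rho> i) * (\<Sum>p<no. \<Sum>q<ni. cnj (X i p q) * CR i p a * (cnj (bv k q) / (sp i - lam k)))))"
    by (simp only: step1)
  also have "\<dots> = (\<Sum>a<r. \<Sum>i<N. \<Sum>p<no. \<Sum>q<ni. Q $$ (a,k) * (of_real (\<rho> i) * (cnj (X i p q) * CR i p a * (cnj (bv k q) / (sp i - lam k)))))"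
    by (simp only: sum_distrib_left)
  also have "\<dots> = (\<Sum>i<N. \<Sum>p<no. \<Sum>q<ni. \<Sum>a<r. Q $$ (a,k) * (of_real (\<rho> i) * (cnj (X i p q) * CR i p a * (cnj (bv k q) / (sp i - lam k)))))"
    by (rule swap3)
  also have "\<dots> = (\<Sum>i<N. of_real (\<rho> i) * (\<Sum>p<no. \<Sum>q<ni. cnj (X i p q) * (\<Sum>a<r. CR i p a * Q $$ (a,k)) * (cnj (bv k q) / (sp i - lam k))))"
    by (simp add: sum_distrib_left sum_distrib_right mult_ac)
  also have "\<dots> = (\<Sum>i<N. of_real (\<rho> i) * (\<Sum>p<no. \<Sum>q<ni. cnj (X i p q) * (cv k p / (sp i - lam k)) * (cnj (bv k q) / (sp i - lam k))))"
    using tau k by (auto intro!: sum.cong)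
  finally have "cnj 0 = cnj (\<Sum>i<N. of_real (\<rho> i) * (\<Sum>p<no. \<Sum>q<ni. cnj (X i p q) * (cv k p / (sp i - lam k)) * (cnj (bv k q) / (sp i - lam k))))"
    by simp
  also have "\<dots> = (\<Sum>i<N. of_real (\<rho> i) / (- cnj (lam k) - sp i)\<^sup>2 * (\<Sum>p<no. \<Sum>q<ni. cnj (cv k p) * X i p q * bv k q))"
    by (simp add: cnj_den cnj_den2 sum_divide_distrib sum_distrib_left mult_ac power2_eq_square)
  finally show ?thesis by simp
qed

lemma Gfun_entry: "p < no \<Longrightarrow> q < ni \<Longrightarrow>
   Gfun no ni N \<omega> M \<rho> z $$ (p,q) = (\<Sum>i<N. of_real (\<rho> i) / (z - sp i) * M i $$ (p,q))"
  unfolding Gfun_def sp_def by simp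

lemma Gfun_carrier: "Gfun no ni N \<omega> M \<rho> z \<in> carrier_mat no ni"
  unfolding Gfun_def by simp

lemma deriv_carrier: "mat_deriv no ni F z \<in> carrier_mat no ni"
  unfolding mat_deriv_def by simp

lemma s0_ne: "k < r \<Longrightarrow> i < N \<Longrightarrow> - cnj (lam k) \<noteq> sp i"
proof
  assume k: "k < r" and i: "i < N" and eq: "- cnj (lam k) = sp i"
  have "lam k = sp i" using arg_cong[OF eq, of cnj] unfolding sp_def by (simp add: complex_eq_iff)
  with sp_ne[OF i k] show False by simp
qed

lemma Gderiv_entry: assumes k: "k < r" and p: "p < no" and q: "q < ni"
  shows "mat_deriv no ni (Gfun no ni N \<omega> M \<rho>) (- cnj (lam k)) $$ (p,q)
     = (\<Sum>i<N. - (of_real (\<rho> i) / (- cnj (lam k) - sp i)\<^sup>2) * M i $$ (p,q))"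
proof -
  have fe: "(\<lambda>z. Gfun no ni N \<omega> M \<rho> z $$ (p,q)) = (\<lambda>z. \<Sum>i<N. of_real (\<rho> i) / (z - sp i) * M i $$ (p,q))"
    using Gfun_entry[OF p q] by auto
  have D: "((\<lambda>z. \<Sum>i<N. of_real (\<rho> i) / (z - sp i) * M i $$ (p,q)) has_field_derivative
     (\<Sum>i<N. - (of_real (\<rho> i) / (- cnj (lam k) - sp i)\<^sup>2) * M i $$ (p,q))) (at (- cnj (lam k)))"
  proof (rule DERIV_sum)
    fix i assume "i \<in> {..<N}"
    then have ne: "- cnj (lam k) - sp i \<noteq> 0" using s0_ne[OF k] by auto
    show "((\<lambda>z. of_real (\<rho> i) / (z - sp i) * M i $$ (p,q)) has_field_derivative
       - (of_real (\<rho> i) / (- cnj (lam k) - sp i)\<^sup>2) * M i $$ (p,q)) (at (- cnj (lam k)))"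
      using ne by (auto intro!: derivative_eq_intros simp: field_simps power2_eq_square)
  qed
  have "mat_deriv no ni (Gfun no ni N \<omega> M \<rho>) (- cnj (lam k)) $$ (p,q) = deriv (\<lambda>z. Gfun no ni N \<omega> M \<rho> z $$ (p,q)) (- cnj (lam k))"
    unfolding mat_deriv_def using p q by simp
  also have "\<dots> = deriv (\<lambda>z. \<Sum>i<N. of_real (\<rho> i) / (z - sp i) * M i $$ (p,q)) (- cnj (lam k))"
    by (simp only: fe)
  also have "\<dots> = (\<Sum>i<N. - (of_real (\<rho> i) / (- cnj (lam k) - sp i)\<^sup>2) * M i $$ (p,q))"
    by (rule DERIV_imp_deriv[OF D])
  finally show ?thesis .
qed

lemma main: "\<forall>k<r.
     (let c = mat_of_cols no [col (cplx C * T) k];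
          b = mat_of_cols ni [col (transpose_mat (cplx B) * S) k];
          s0 = - cnj (lam k);
          G = Gfun no ni N \<omega> H \<rho>;
          Ghat = Gfun no ni N \<omega> (\<lambda>i. tf E A B C (\<i> * complex_of_real (\<omega> i))) \<rho>
      in G s0 * b = Ghat s0 * b \<and>
         mat_adjoint c * G s0 = mat_adjoint c * Ghat s0 \<and>
         mat_adjoint c * mat_deriv no ni G s0 * b = mat_adjoint c * mat_deriv no ni Ghat s0 * b)"
proof (intro allI impI)
  fix k assume k: "k < r"
  define c where "c = mat_of_cols no [col (cplx C * T) k]"
  define b where "b = mat_of_cols ni [col (transpose_mat (cplx B) * S) k]"
  define s0 where "s0 = - cnj (lam k)"
  define G where "G = Gfun no ni N \<omega> H \<rho>"
  define Gh where "Gh = Gfun no ni N \<omega> (\<lambda>i. tf E A B C (\<i> * complex_of_real (\<omega> i))) \<rho>"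
  have Gh_alt: "Gh = Gfun no ni N \<omega> (\<lambda>i. tf E A B C (sp i)) \<rho>" unfolding Gh_def sp_def ..
  have bc: "b \<in> carrier_mat ni 1" unfolding b_def using dims S_T by auto
  have cc: "c \<in> carrier_mat no 1" unfolding c_def using dims S_T by auto
  have ac: "mat_adjoint c \<in> carrier_mat 1 no" using adj_carrier[OF cc] .
  have bent: "b $$ (q,0) = bv k q" if q: "q < ni" for q
  proof -
    have "b $$ (q,0) = (transpose_mat (cplx B) * S) $$ (q,k)"
      unfolding b_def using q k dims S_T by (simp add: mat_of_cols_def)
    also have "\<dots> = (\<Sum>m<r. transpose_mat (cplx B) $$ (q,m) * S $$ (m,k))"
      by (rule mult_entry) (use q k dims S_T in auto)
    also have "\<dots> = bv k q" unfolding bv_def using q dims by (auto intro!: sum.cong)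
    finally show ?thesis .
  qed
  have cent: "mat_adjoint c $$ (0,p) = cnj (cv k p)" if p: "p < no" for p
  proof -
    have "c $$ (p,0) = (cplx C * T) $$ (p,k)"
      unfolding c_def using p k dims S_T by (simp add: mat_of_cols_def)
    also have "\<dots> = (\<Sum>j<r. cplx C $$ (p,j) * T $$ (j,k))"
      by (rule mult_entry) (use p k dims S_T in auto)
    also have "\<dots> = cv k p" unfolding cv_def using p dims by (auto intro!: sum.cong)
    finally show ?thesis using adj_entry[OF cc, of 0 p] p by simp
  qed
  have Xe: "X i p q = H i $$ (p,q) - tf E A B C (sp i) $$ (p,q)" if "i < N" "p < no" "q < ni" for i p q
    unfolding X_def using tf_carrier[OF that(1)] that by simp
  have Gdiff: "G s0 $$ (p,q) = Gh s0 $$ (p,q) + (\<Sum>i<N. of_real (\<rho> i) / (s0 - sp i) * X i p q)"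
    if p: "p < no" and q: "q < ni" for p q
    unfolding G_def Gh_alt Gfun_entry[OF p q] sum.distrib[symmetric]
    by (rule sum.cong[OF refl]) (simp add: Xe p q algebra_simps)
  have Ddiff: "mat_deriv no ni G s0 $$ (p,q) = mat_deriv no ni Gh s0 $$ (p,q) - (\<Sum>i<N. of_real (\<rho> i) / (s0 - sp i)\<^sup>2 * X i p q)"
    if p: "p < no" and q: "q < ni" for p q
    unfolding G_def Gh_alt s0_def Gderiv_entry[OF k p q] sum_subtractf[symmetric]
    by (rule sum.cong[OF refl]) (simp add: Xe p q algebra_simps)
  have g1: "G s0 * b = Gh s0 * b"
  proof (rule eq_matI)
    fix p j assume "p < dim_row (Gh s0 * b)" "j < dim_col (Gh s0 * b)"
    then have p: "p < no" and j: "j = 0" using bc unfolding Gh_def by (auto simp: Gfun_def)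
    have "(G s0 * b) $$ (p,0) = (\<Sum>q<ni. G s0 $$ (p,q) * b $$ (q,0))"
      by (rule mult_entry) (use p bc Gfun_carrier in \<open>auto simp: G_def\<close>)
    also have "\<dots> = (\<Sum>q<ni. Gh s0 $$ (p,q) * b $$ (q,0)) + (\<Sum>q<ni. \<Sum>i<N. of_real (\<rho> i) / (s0 - sp i) * X i p q * bv k q)"
    proof -
      have "(\<Sum>q<ni. G s0 $$ (p,q) * b $$ (q,0)) = (\<Sum>q<ni. Gh s0 $$ (p,q) * b $$ (q,0) + (\<Sum>i<N. of_real (\<rho> i) / (s0 - sp i) * X i p q) * bv k q)"
        by (rule sum.cong[OF refl]) (simp add: Gdiff[OF p] bent distrib_right)
      then show ?thesis by (simp add: sum.distrib sum_distrib_right)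
    qed
    also have "(\<Sum>q<ni. \<Sum>i<N. of_real (\<rho> i) / (s0 - sp i) * X i p q * bv k q)
        = (\<Sum>i<N. of_real (\<rho> i) / (- cnj (lam k) - sp i) * (\<Sum>q<ni. X i p q * bv k q))"
      unfolding s0_def by (subst sum.swap) (simp add: sum_distrib_left mult_ac)
    also have "\<dots> = 0" using F1[OF k p] .
    also have "(\<Sum>q<ni. Gh s0 $$ (p,q) * b $$ (q,0)) = (Gh s0 * b) $$ (p,0)"
      by (rule mult_entry[symmetric]) (use p bc Gfun_carrier in \<open>auto simp: Gh_def\<close>)
    finally show "(G s0 * b) $$ (p,j) = (Gh s0 * b) $$ (p,j)" using j by simp
  qed (auto simp: G_def Gh_def Gfun_def)
  have g2: "mat_adjoint c * G s0 = mat_adjoint c * Gh s0"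
  proof (rule eq_matI)
    fix j q assume "j < dim_row (mat_adjoint c * Gh s0)" "q < dim_col (mat_adjoint c * Gh s0)"
    then have q: "q < ni" and j: "j = 0" using ac unfolding Gh_def by (auto simp: Gfun_def)
    have "(mat_adjoint c * G s0) $$ (0,q) = (\<Sum>p<no. mat_adjoint c $$ (0,p) * G s0 $$ (p,q))"
      by (rule mult_entry) (use q ac Gfun_carrier in \<open>auto simp: G_def\<close>)
    also have "\<dots> = (\<Sum>p<no. mat_adjoint c $$ (0,p) * Gh s0 $$ (p,q)) + (\<Sum>p<no. \<Sum>i<N. of_real (\<rho> i) / (s0 - sp i) * (cnj (cv k p) * X i p q))"
    proof -
      have "(\<Sum>p<no. mat_adjoint c $$ (0,p) * G s0 $$ (p,q)) = (\<Sum>p<no. mat_adjoint c $$ (0,p) * Gh s0 $$ (p,q) + cnj (cv k p) * (\<Sum>i<N. of_real (\<rho> i) / (s0 - sp i) * X i p q))"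
        by (rule sum.cong[OF refl]) (simp add: Gdiff[OF _ q] cent distrib_left)
      then show ?thesis by (simp add: sum.distrib sum_distrib_left mult_ac)
    qed
    also have "(\<Sum>p<no. \<Sum>i<N. of_real (\<rho> i) / (s0 - sp i) * (cnj (cv k p) * X i p q))
        = (\<Sum>i<N. of_real (\<rho> i) / (- cnj (lam k) - sp i) * (\<Sum>p<no. cnj (cv k p) * X i p q))"
      unfolding s0_def by (subst sum.swap) (simp add: sum_distrib_left)
    also have "\<dots> = 0" using F2[OF k q] .
    also have "(\<Sum>p<no. mat_adjoint c $$ (0,p) * Gh s0 $$ (p,q)) = (mat_adjoint c * Gh s0) $$ (0,q)"
      by (rule mult_entry[symmetric]) (use q ac Gfun_carrier in \<open>auto simp: Gh_def\<close>)
    finally show "(mat_adjoint c * G s0) $$ (j,q) = (mat_adjoint c * Gh s0) $$ (j,q)" using j by simp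
  qed (auto simp: G_def Gh_def Gfun_def)
  have g3: "mat_adjoint c * mat_deriv no ni G s0 * b = mat_adjoint c * mat_deriv no ni Gh s0 * b"
  proof (rule eq_matI)
    fix j l assume "j < dim_row (mat_adjoint c * mat_deriv no ni Gh s0 * b)" "l < dim_col (mat_adjoint c * mat_deriv no ni Gh s0 * b)"
    then have j: "j = 0" and l: "l = 0" using ac bc by auto
    have e: "(mat_adjoint c * mat_deriv no ni F s0 * b) $$ (0,0) =
       (\<Sum>q<ni. (\<Sum>p<no. mat_adjoint c $$ (0,p) * mat_deriv no ni F s0 $$ (p,q)) * b $$ (q,0))" for F
      by (rule triple_entry[of _ 1 no _ ni _ 1]) (use ac bc deriv_carrier in auto)
    have "(\<Sum>q<ni. (\<Sum>p<no. mat_adjoint c $$ (0,p) * mat_deriv no ni G s0 $$ (p,q)) * b $$ (q,0))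
       = (\<Sum>q<ni. (\<Sum>p<no. mat_adjoint c $$ (0,p) * mat_deriv no ni Gh s0 $$ (p,q)) * b $$ (q,0))
         - (\<Sum>q<ni. \<Sum>p<no. \<Sum>i<N. of_real (\<rho> i) / (s0 - sp i)\<^sup>2 * (cnj (cv k p) * X i p q * bv k q))"
    proof -
      have "(\<Sum>p<no. mat_adjoint c $$ (0,p) * mat_deriv no ni G s0 $$ (p,q)) = (\<Sum>p<no. mat_adjoint c $$ (0,p) * mat_deriv no ni Gh s0 $$ (p,q))
          - (\<Sum>p<no. cnj (cv k p) * (\<Sum>i<N. of_real (\<rho> i) / (s0 - sp i)\<^sup>2 * X i p q))" if q: "q < ni" for q
        unfolding sum_subtractf[symmetric] by (rule sum.cong[OF refl]) (simp add: Ddiff[OF _ q] cent right_diff_distrib)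
      then have "(\<Sum>q<ni. (\<Sum>p<no. mat_adjoint c $$ (0,p) * mat_deriv no ni G s0 $$ (p,q)) * b $$ (q,0))
        = (\<Sum>q<ni. (\<Sum>p<no. mat_adjoint c $$ (0,p) * mat_deriv no ni Gh s0 $$ (p,q)) * b $$ (q,0)
          - (\<Sum>p<no. cnj (cv k p) * (\<Sum>i<N. of_real (\<rho> i) / (s0 - sp i)\<^sup>2 * X i p q)) * bv k q)"
        by (intro sum.cong refl) (simp add: bent left_diff_distrib)
      then show ?thesis by (simp add: sum_subtractf sum_distrib_left sum_distrib_right mult_ac)
    qed
    also have "(\<Sum>q<ni. \<Sum>p<no. \<Sum>i<N. of_real (\<rho> i) / (s0 - sp i)\<^sup>2 * (cnj (cv k p) * X i p q * bv k q))
       = (\<Sum>i<N. of_real (\<rho> i) / (- cnj (lam k) - sp i)\<^sup>2 * (\<Sum>p<no. \<Sum>q<ni. cnj (cv k p) * X i p q * bv k q))"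
    proof -
      have "(\<Sum>q<ni. \<Sum>p<no. \<Sum>i<N. of_real (\<rho> i) / (s0 - sp i)\<^sup>2 * (cnj (cv k p) * X i p q * bv k q))
         = (\<Sum>p<no. \<Sum>q<ni. \<Sum>i<N. of_real (\<rho> i) / (s0 - sp i)\<^sup>2 * (cnj (cv k p) * X i p q * bv k q))"
        by (rule sum.swap)
      also have "\<dots> = (\<Sum>i<N. \<Sum>p<no. \<Sum>q<ni. of_real (\<rho> i) / (s0 - sp i)\<^sup>2 * (cnj (cv k p) * X i p q * bv k q))"
        by (rule swap2[symmetric])
      finally show ?thesis unfolding s0_def by (simp add: sum_distrib_left)
    qed
    also have "\<dots> = 0" using F3[OF k] .
    finally show "(mat_adjoint c * mat_deriv no ni G s0 * b) $$ (j,l) = (mat_adjoint c * mat_deriv no ni Gh s0 * b) $$ (j,l)"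
      using e j l by simp
  qed (use ac bc in auto)
  show "let c = mat_of_cols no [col (cplx C * T) k];
          b = mat_of_cols ni [col (transpose_mat (cplx B) * S) k];
          s0 = - cnj (lam k);
          G = Gfun no ni N \<omega> H \<rho>;
          Ghat = Gfun no ni N \<omega> (\<lambda>i. tf E A B C (\<i> * complex_of_real (\<omega> i))) \<rho>
      in G s0 * b = Ghat s0 * b \<and>
         mat_adjoint c * G s0 = mat_adjoint c * Ghat s0 \<and>
         mat_adjoint c * mat_deriv no ni G s0 * b = mat_adjoint c * mat_deriv no ni Ghat s0 * b"
    using g1 g2 g3 unfolding Let_def c_def b_def s0_def G_def Gh_def by blast
qed

end

theorem corollary4p2:
  fixes N r ni no :: nat
    and \<omega> \<rho> :: "nat \<Rightarrow> real"
    and H :: "nat \<Rightarrow> complex mat"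
    and E A B C :: "real mat"
    and S T :: "complex mat"
    and lam :: "nat \<Rightarrow> complex"
  assumes H_dim: "\<forall>i<N. H i \<in> carrier_mat no ni"
    and \<omega>_distinct: "inj_on \<omega> {..<N}"
    and conj_closed: "\<forall>k<N. \<exists>j<N. \<omega> j = - \<omega> k \<and> H j = map_mat cnj (H k) \<and> \<rho> j = \<rho> k"
    and \<rho>_pos: "\<forall>i<N. \<rho> i > 0"
    and S_T: "S \<in> carrier_mat r r" "T \<in> carrier_mat r r" "invertible_mat S" "invertible_mat T"
    and SET: "mat_adjoint S * cplx E * T = 1\<^sub>m r"
    and SAT: "mat_adjoint S * cplx A * T = mat r r (\<lambda>(i,j). if i = j then lam i else 0)"
    and poles_distinct: "\<forall>i<r. \<forall>j<r. i \<noteq> j \<longrightarrow> lam i \<noteq> lam j"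
    and locmin: "local_minimizer N \<omega> H \<rho> r ni no E A B C"
  shows "\<forall>k<r.
     (let c = mat_of_cols no [col (cplx C * T) k];
          b = mat_of_cols ni [col (transpose_mat (cplx B) * S) k];
          s0 = - cnj (lam k);
          G = Gfun no ni N \<omega> H \<rho>;
          Ghat = Gfun no ni N \<omega> (\<lambda>i. tf E A B C (\<i> * complex_of_real (\<omega> i))) \<rho>
      in G s0 * b = Ghat s0 * b \<and>
         mat_adjoint c * G s0 = mat_adjoint c * Ghat s0 \<and>
         mat_adjoint c * mat_deriv no ni G s0 * b = mat_adjoint c * mat_deriv no ni Ghat s0 * b)"
proof -
  have "cfg N r ni no \<omega> \<rho> H E A B C S T lam"
    unfolding cfg_def using H_dim \<omega>_distinct conj_closed \<rho>_pos S_T SET SAT poles_distinct locmin by blast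
  then show ?thesis by (rule cfg.main)
qed

end
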